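(* For every integer $n \geq 3$: \begin{align*} f_{(n,3,3),2} &= q^9 \begin{bmatrix} n-1 \\ 2 \end{bmatrix}_q, \\ f_{(n,3,3),3} &= q^{11} \begin{bmatrix} n-1 \\ 2 \end{bmatrix}_q \begin{bmatrix} n+3 \\ 1 \end{bmatrix}_q + q^{12} \begin{bmatrix} n \\ 3 \end{bmatrix}_q \begin{bmatrix} 4 \\ 1 \end{bmatrix}_q, \\ f_{(n,3,3),4} &= q^{15} \begin{bmatrix} n-1 \\ 2 \end{bmatrix}_q \begin{bmatrix} n+2 \\ 2 \end{bmatrix}_q + q^{15} \begin{bmatrix} n+1 \\ 4 \end{bmatrix}_q \begin{bmatrix} 5 \\ 2 \end{bmatrix}_q, \\ f_{(n,3,3),5} &= q^{21} \begin{bmatrix} n-1 \\ 2 \end{bmatrix}_q \begin{bmatrix} n+1 \\ 3 \end{bmatrix}_q + q^{20} \begin{bmatrix} n+1 \\ 4 \end{bmatrix}_q \begin{bmatrix} n+3 \\ 1 \end{bmatrix}_q, \\ f_{(n,3,3),6} &= q^{27} \frac{(1-q^{n-2})(1-q^{n-1})^2 (1-q^n)^2(1-q^{n+1})}{(1-q)(1-q^2)^2(1-q^3)^2 (1-q^4)} = q^{27} \begin{bmatrix} n \\ 3 \end{bmatrix}_q^2 - q^{28} \begin{bmatrix} n \\ 4 \end{bmatrix}_q \begin{bmatrix} n \\ 2 \end{bmatrix}_q. \end{align*}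
   Context: For a partition $\lambda\vdash N$, a standard Young tableau of shape $\lambda$ is a filling of the Ferrers diagram with $1,\dots,N$, increasing along rows and down columns; it has a descent at $m$ if $m+1$ lies in a strictly lower row than $m$; $\mathrm{des}$ is the number of descents and $\mathrm{maj}$ their sum. $f_{\lambda,i}(q)=\sum q^{\mathrm{maj}(\tau)}$ over standard Young tableaux of shape $\lambda$ with $\mathrm{des}(\tau)=i$. The $q$-binomial coefficient is $\frac{(q)_M}{(q)_N(q)_{M-N}}$, $(q)_m=(1-q)\cdots(1-q^m)$, for integers $0\le N\le M$, and $0$ otherwise. *)

theory Defs
  imports "HOL-Computational_Algebra.Polynomial"
begin

definition qvar :: "int poly" where "qvar = [:0, 1:]"

definition qpoch :: "nat \<Rightarrow> int poly" where
  "qpoch m = (\<Prod>i\<in>{1..m}. 1 - qvar ^ i)"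

text \<open>q-binomial coefficient (exact polynomial division); 0 unless 0 <= N <= M (integers).\<close>
definition qbinom :: "int \<Rightarrow> int \<Rightarrow> int poly" where
  "qbinom M N = (if 0 \<le> N \<and> N \<le> M
      then qpoch (nat M) div (qpoch (nat N) * qpoch (nat (M - N))) else 0)"

definition is_partition :: "nat list \<Rightarrow> bool" where
  "is_partition lam \<longleftrightarrow> sorted_wrt (\<ge>) lam \<and> (\<forall>x\<in>set lam. 0 < x)"

definition cells :: "nat list \<Rightarrow> (nat \<times> nat) set" where
  "cells lam = {(i, j). i < length lam \<and> j < lam ! i}"

definition syt :: "nat list \<Rightarrow> (nat \<times> nat \<Rightarrow> nat) \<Rightarrow> bool" where
  "syt lam T \<longleftrightarrow>
     bij_betw T (cells lam) {1..sum_list lam} \<and>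
     (\<forall>i j. (i, j) \<in> cells lam \<and> (i, Suc j) \<in> cells lam \<longrightarrow> T (i, j) < T (i, Suc j)) \<and>
     (\<forall>i j. (i, j) \<in> cells lam \<and> (Suc i, j) \<in> cells lam \<longrightarrow> T (i, j) < T (Suc i, j)) \<and>
     (\<forall>c. c \<notin> cells lam \<longrightarrow> T c = 0)"

definition row_of :: "nat list \<Rightarrow> (nat \<times> nat \<Rightarrow> nat) \<Rightarrow> nat \<Rightarrow> nat" where
  "row_of lam T m = fst (inv_into (cells lam) T m)"

definition descents :: "nat list \<Rightarrow> (nat \<times> nat \<Rightarrow> nat) \<Rightarrow> nat set" where
  "descents lam T = {m. 1 \<le> m \<and> m < sum_list lam \<and> row_of lam T m < row_of lam T (Suc m)}"

definition des :: "nat list \<Rightarrow> (nat \<times> nat \<Rightarrow> nat) \<Rightarrow> nat" where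
  "des lam T = card (descents lam T)"

definition maj :: "nat list \<Rightarrow> (nat \<times> nat \<Rightarrow> nat) \<Rightarrow> nat" where
  "maj lam T = \<Sum>(descents lam T)"

definition f_poly :: "nat list \<Rightarrow> nat \<Rightarrow> int poly" where
  "f_poly lam i = (\<Sum>T\<in>{T. syt lam T \<and> des lam T = i}. qvar ^ maj lam T)"

end

theory Submission
  imports Defs
begin


fun addL :: "int list \<Rightarrow> int list \<Rightarrow> int list" where
  "addL [] ys = ys" | "addL xs [] = xs" | "addL (x#xs) (y#ys) = (x+y) # addL xs ys"

fun addLL :: "int list list \<Rightarrow> int list list \<Rightarrow> int list list" where
  "addLL [] ys = ys" | "addLL xs [] = xs" | "addLL (x#xs) (y#ys) = addL x y # addLL xs ys"

definition shL :: "nat \<Rightarrow> int list \<Rightarrow> int list" where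
  "shL k xs = replicate k 0 @ xs"

fun scLL :: "nat \<Rightarrow> int list list \<Rightarrow> int list list" where
  "scLL k [] = []" | "scLL k (x#xs) = shL k x # scLL (Suc k) xs"

fun mulL :: "int list \<Rightarrow> int list \<Rightarrow> int list" where
  "mulL [] ys = []" | "mulL (x#xs) ys = addL (map ((*) x) ys) (0 # mulL xs ys)"

fun mulLL :: "int list list \<Rightarrow> int list list \<Rightarrow> int list list" where
  "mulLL [] ys = []" | "mulLL (x#xs) ys = addLL (map (mulL x) ys) ([] # mulLL xs ys)"

definition normLL :: "int list list \<Rightarrow> int list list" where
  "normLL xs = strip_while ((=) []) (map (strip_while ((=) 0)) xs)"

definition pll :: "int list list \<Rightarrow> int poly poly" where
  "pll xss = Poly (map Poly xss)"

lemma qvar_mult: "qvar * p = pCons 0 p"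
  by (simp add: qvar_def)

lemma Poly_addL: "Poly (addL x y) = Poly x + Poly y"
  by (induction x y rule: addL.induct) auto

lemma pll_addLL: "pll (addLL x y) = pll x + pll y"
  by (induction x y rule: addLL.induct) (auto simp: pll_def Poly_addL)

lemma Poly_shL: "Poly (shL k x) = qvar ^ k * Poly x"
  by (induction k) (auto simp: shL_def qvar_mult mult.assoc)

lemma Poly_map_mult: "Poly (map ((*) a) ys) = smult a (Poly ys)"
  by (induction ys) auto

lemma Poly_mulL: "Poly (mulL x y) = Poly x * Poly y"
  by (induction x) (auto simp: Poly_addL Poly_map_mult)

lemma pll_map_mulL: "pll (map (mulL a) ys) = smult (Poly a) (pll ys)"
  by (induction ys) (auto simp: pll_def Poly_mulL)

lemma pll_Nil_Cons: "pll ([] # xs) = pCons 0 (pll xs)"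
  by (simp add: pll_def)

lemma pll_Cons: "pll (a # x) = pCons (Poly a) (pll x)"
  by (simp add: pll_def)

lemma pll_mulLL: "pll (mulLL x y) = pll x * pll y"
  by (induction x) (auto simp: pll_addLL pll_map_mulL pll_Nil_Cons pll_Cons, simp add: pll_def)

lemma pll_map_shL: "pll (map (shL k) xs) = smult (qvar ^ k) (pll xs)"
  by (induction xs) (auto simp: pll_def Poly_shL)

lemma poly_scLL: "poly (pll (scLL k xs)) Y = qvar ^ k * poly (pll xs) (qvar * Y)"
  by (induction xs arbitrary: k) (auto simp: pll_def Poly_shL algebra_simps)

lemma Poly_strip: "Poly (strip_while ((=) 0) xs) = Poly xs"
  by (subst coeffs_eq_iff) (simp add: strip_while_idem)

lemma Poly_map_strip_nil: "Poly (map Poly (strip_while ((=) []) ys)) = Poly (map Poly ys)"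
proof (induction ys rule: rev_induct)
  case Nil then show ?case by simp
next
  case (snoc y ys) then show ?case by auto
qed

lemma pll_normLL: "pll (normLL xs) = pll xs"
proof -
  have "map Poly (map (strip_while ((=) 0)) xs) = map Poly xs"
    by (simp add: Poly_strip)
  then show ?thesis unfolding normLL_def pll_def
    by (metis Poly_map_strip_nil)
qed

lemma normLL_eq: "normLL x = normLL y \<Longrightarrow> pll x = pll y"
  by (metis pll_normLL)

lemma Poly_strip_eq: "strip_while ((=) 0) x = strip_while ((=) 0) y \<Longrightarrow> Poly x = Poly y"
  by (metis Poly_strip)

definition cnt :: "nat \<Rightarrow> nat \<Rightarrow> nat \<Rightarrow> nat \<Rightarrow> nat" where
  "cnt a b c r = (if r = 0 then a else if r = 1 then b else c)"

definition dd :: "nat \<Rightarrow> nat \<Rightarrow> nat \<Rightarrow> nat" where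
  "dd k x r = (if r = k then x - 1 else x)"

definition L_0_0_0_0 :: "unit \<Rightarrow> int list list" where "L_0_0_0_0 u = [[1,-2,-1,2,2,2,-5,-2,0,2,5,-2,-2,-2,1,2,-1]]"

definition L_1_1_0_0 :: "unit \<Rightarrow> int list list" where "L_1_1_0_0 u = [[0,1,-1,-2,0,2,4,-1,-3,-3,-1,4,2,0,-2,-1,1],[0,0,0,-1,1,2,0,-2,-4,1,3,3,1,-4,-2,0,2,1,-1]]"

definition L_1_1_0_1 :: "unit \<Rightarrow> int list list" where "L_1_1_0_1 u = [[],[0,0,0,1,-2,-1,2,2,2,-5,-2,0,2,5,-2,-2,-2,1,2,-1]]"

definition L_1_2_0_0 :: "unit \<Rightarrow> int list list" where "L_1_2_0_0 u = [[0,0,1,-1,-2,0,2,4,-1,-3,-3,-1,4,2,0,-2,-1,1],[0,0,0,-1,1,2,0,-2,-4,1,3,3,1,-4,-2,0,2,1,-1]]"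

definition L_1_2_0_1 :: "unit \<Rightarrow> int list list" where "L_1_2_0_1 u = [[],[0,0,0,1,-2,-1,2,2,2,-5,-2,0,2,5,-2,-2,-2,1,2,-1]]"

definition L_1_3_0_0 :: "unit \<Rightarrow> int list list" where "L_1_3_0_0 u = [[0,0,0,1,-1,-2,0,2,4,-1,-3,-3,-1,4,2,0,-2,-1,1],[0,0,0,-1,1,2,0,-2,-4,1,3,3,1,-4,-2,0,2,1,-1]]"

definition L_1_3_0_1 :: "unit \<Rightarrow> int list list" where "L_1_3_0_1 u = [[],[0,0,0,1,-2,-1,2,2,2,-5,-2,0,2,5,-2,-2,-2,1,2,-1]]"

definition L_2_1_1_0 :: "unit \<Rightarrow> int list list" where "L_2_1_1_0 u = [[0,0,0,1,-1,-1,-1,1,3,0,0,-3,-1,1,1,1,-1],[0,0,0,0,0,-1,0,2,2,0,-4,-3,0,3,4,0,-2,-2,0,1],[0,0,0,0,0,0,0,0,1,-1,-1,-1,1,3,0,0,-3,-1,1,1,1,-1]]"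

definition L_2_1_1_2 :: "unit \<Rightarrow> int list list" where "L_2_1_1_2 u = [[],[0,0,0,0,0,1,-1,-2,0,2,4,-1,-3,-3,-1,4,2,0,-2,-1,1],[0,0,0,0,0,0,0,0,-1,1,2,0,-2,-4,1,3,3,1,-4,-2,0,2,1,-1]]"

definition L_2_2_0_0 :: "unit \<Rightarrow> int list list" where "L_2_2_0_0 u = [[0,0,0,0,1,-1,-1,-1,1,3,0,0,-3,-1,1,1,1,-1],[0,0,0,0,0,-1,0,2,2,0,-4,-3,0,3,4,0,-2,-2,0,1],[0,0,0,0,0,0,0,1,-1,-1,-1,1,3,0,0,-3,-1,1,1,1,-1]]"

definition L_2_2_0_1 :: "unit \<Rightarrow> int list list" where "L_2_2_0_1 u = [[],[0,0,0,0,0,1,-1,-2,0,2,4,-1,-3,-3,-1,4,2,0,-2,-1,1],[0,0,0,0,0,0,0,-1,1,2,0,-2,-4,1,3,3,1,-4,-2,0,2,1,-1]]"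

definition L_2_2_1_0 :: "unit \<Rightarrow> int list list" where "L_2_2_1_0 u = [[0,0,0,0,1,0,-2,-2,0,4,3,0,-3,-4,0,2,2,0,-1],[0,0,0,0,0,-1,0,1,2,2,-2,-3,-4,0,4,3,2,-2,-2,-1,0,1],[0,0,0,0,0,0,0,0,1,0,-2,-2,0,4,3,0,-3,-4,0,2,2,0,-1]]"

definition L_2_2_1_1 :: "unit \<Rightarrow> int list list" where "L_2_2_1_1 u = [[],[0,0,0,0,0,1,-1,-2,0,2,4,-1,-3,-3,-1,4,2,0,-2,-1,1],[0,0,0,0,0,0,0,0,-1,1,2,0,-2,-4,1,3,3,1,-4,-2,0,2,1,-1]]"

definition L_2_2_1_2 :: "unit \<Rightarrow> int list list" where "L_2_2_1_2 u = [[],[0,0,0,0,0,0,0,1,-1,-2,0,2,4,-1,-3,-3,-1,4,2,0,-2,-1,1],[0,0,0,0,0,0,0,0,0,-1,1,2,0,-2,-4,1,3,3,1,-4,-2,0,2,1,-1]]"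

definition L_2_2_2_0 :: "unit \<Rightarrow> int list list" where "L_2_2_2_0 u = [[0,0,0,0,0,0,1,-1,-1,-1,1,3,0,0,-3,-1,1,1,1,-1],[0,0,0,0,0,0,0,-1,0,2,2,0,-4,-3,0,3,4,0,-2,-2,0,1],[0,0,0,0,0,0,0,0,0,1,-1,-1,-1,1,3,0,0,-3,-1,1,1,1,-1]]"

definition L_2_2_2_2 :: "unit \<Rightarrow> int list list" where "L_2_2_2_2 u = [[],[0,0,0,0,0,0,0,1,-1,-2,0,2,4,-1,-3,-3,-1,4,2,0,-2,-1,1],[0,0,0,0,0,0,0,0,0,-1,1,2,0,-2,-4,1,3,3,1,-4,-2,0,2,1,-1]]"

definition L_2_3_0_0 :: "unit \<Rightarrow> int list list" where "L_2_3_0_0 u = [[0,0,0,0,0,1,0,-2,-2,0,4,3,0,-3,-4,0,2,2,0,-1],[0,0,0,0,0,-1,0,1,2,2,-2,-3,-4,0,4,3,2,-2,-2,-1,0,1],[0,0,0,0,0,0,0,1,0,-2,-2,0,4,3,0,-3,-4,0,2,2,0,-1]]"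

definition L_2_3_0_1 :: "unit \<Rightarrow> int list list" where "L_2_3_0_1 u = [[],[0,0,0,0,0,1,-1,-1,-1,0,4,1,1,-4,-4,1,1,4,0,-1,-1,-1,1],[0,0,0,0,0,0,0,-1,0,3,2,-2,-6,-3,4,6,4,-3,-6,-2,2,3,0,-1]]"

definition L_2_3_1_0 :: "unit \<Rightarrow> int list list" where "L_2_3_1_0 u = [[0,0,0,0,0,1,0,-1,-3,-1,3,4,3,-3,-4,-3,1,3,1,0,-1],[0,0,0,0,0,-1,0,1,2,1,-2,-1,-2,0,0,0,2,1,2,-1,-2,-1,0,1],[0,0,0,0,0,0,0,0,1,0,-1,-3,-1,3,4,3,-3,-4,-3,1,3,1,0,-1]]"

definition L_2_3_1_1 :: "unit \<Rightarrow> int list list" where "L_2_3_1_1 u = [[],[0,0,0,0,0,1,-1,-1,-1,0,4,1,1,-4,-4,1,1,4,0,-1,-1,-1,1],[0,0,0,0,0,0,0,0,-1,0,3,2,-2,-6,-3,4,6,4,-3,-6,-2,2,3,0,-1]]"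

definition L_2_3_1_2 :: "unit \<Rightarrow> int list list" where "L_2_3_1_2 u = [[],[0,0,0,0,0,0,0,0,0,1,-1,-2,0,2,4,-1,-3,-3,-1,4,2,0,-2,-1,1],[0,0,0,0,0,0,0,0,0,0,-1,1,2,0,-2,-4,1,3,3,1,-4,-2,0,2,1,-1]]"

definition L_2_3_2_0 :: "unit \<Rightarrow> int list list" where "L_2_3_2_0 u = [[0,0,0,0,0,0,0,1,0,-2,-2,0,4,3,0,-3,-4,0,2,2,0,-1],[0,0,0,0,0,0,0,-1,0,1,2,2,-2,-3,-4,0,4,3,2,-2,-2,-1,0,1],[0,0,0,0,0,0,0,0,0,1,0,-2,-2,0,4,3,0,-3,-4,0,2,2,0,-1]]"

definition L_2_3_2_1 :: "unit \<Rightarrow> int list list" where "L_2_3_2_1 u = [[],[0,0,0,0,0,0,0,1,-1,-2,0,2,4,-1,-3,-3,-1,4,2,0,-2,-1,1],[0,0,0,0,0,0,0,0,0,-1,1,2,0,-2,-4,1,3,3,1,-4,-2,0,2,1,-1]]"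

definition L_2_3_2_2 :: "unit \<Rightarrow> int list list" where "L_2_3_2_2 u = [[],[0,0,0,0,0,0,0,0,0,1,-1,-2,0,2,4,-1,-3,-3,-1,4,2,0,-2,-1,1],[0,0,0,0,0,0,0,0,0,0,-1,1,2,0,-2,-4,1,3,3,1,-4,-2,0,2,1,-1]]"

definition L_2_3_3_0 :: "unit \<Rightarrow> int list list" where "L_2_3_3_0 u = [[0,0,0,0,0,0,0,0,0,1,-1,-1,-1,1,3,0,0,-3,-1,1,1,1,-1],[0,0,0,0,0,0,0,0,0,-1,0,2,2,0,-4,-3,0,3,4,0,-2,-2,0,1],[0,0,0,0,0,0,0,0,0,0,1,-1,-1,-1,1,3,0,0,-3,-1,1,1,1,-1]]"

definition L_2_3_3_2 :: "unit \<Rightarrow> int list list" where "L_2_3_3_2 u = [[],[0,0,0,0,0,0,0,0,0,1,-1,-2,0,2,4,-1,-3,-3,-1,4,2,0,-2,-1,1],[0,0,0,0,0,0,0,0,0,0,-1,1,2,0,-2,-4,1,3,3,1,-4,-2,0,2,1,-1]]"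

definition L_3_2_1_0 :: "unit \<Rightarrow> int list list" where "L_3_2_1_0 u = [[0,0,0,0,0,0,0,1,0,-2,-1,0,2,2,0,-1,-2,0,1],[0,0,0,0,0,0,0,0,-1,-1,1,3,3,-1,-4,-4,-1,3,3,1,-1,-1],[0,0,0,0,0,0,0,0,0,0,1,1,-1,-3,-3,1,4,4,1,-3,-3,-1,1,1],[0,0,0,0,0,0,0,0,0,0,0,0,0,-1,0,2,1,0,-2,-2,0,1,2,0,-1]]"

definition L_3_2_1_1 :: "unit \<Rightarrow> int list list" where "L_3_2_1_1 u = [[],[0,0,0,0,0,0,0,0,1,-1,-1,-1,1,3,0,0,-3,-1,1,1,1,-1],[0,0,0,0,0,0,0,0,0,0,-1,0,2,2,0,-4,-3,0,3,4,0,-2,-2,0,1],[0,0,0,0,0,0,0,0,0,0,0,0,0,1,-1,-1,-1,1,3,0,0,-3,-1,1,1,1,-1]]"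

definition L_3_2_1_2 :: "unit \<Rightarrow> int list list" where "L_3_2_1_2 u = [[],[0,0,0,0,0,0,0,0,0,1,-1,-1,-1,1,3,0,0,-3,-1,1,1,1,-1],[0,0,0,0,0,0,0,0,0,0,0,-1,0,2,2,0,-4,-3,0,3,4,0,-2,-2,0,1],[0,0,0,0,0,0,0,0,0,0,0,0,0,0,1,-1,-1,-1,1,3,0,0,-3,-1,1,1,1,-1]]"

definition L_3_2_2_0 :: "unit \<Rightarrow> int list list" where "L_3_2_2_0 u = [[0,0,0,0,0,0,0,0,1,0,-1,-2,-1,2,2,2,-1,-2,-1,0,1],[0,0,0,0,0,0,0,0,0,-1,-1,0,3,4,1,-3,-6,-3,1,4,3,0,-1,-1],[0,0,0,0,0,0,0,0,0,0,0,1,1,0,-3,-4,-1,3,6,3,-1,-4,-3,0,1,1],[0,0,0,0,0,0,0,0,0,0,0,0,0,0,-1,0,1,2,1,-2,-2,-2,1,2,1,0,-1]]"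

definition L_3_2_2_2 :: "unit \<Rightarrow> int list list" where "L_3_2_2_2 u = [[],[0,0,0,0,0,0,0,0,0,1,0,-1,-3,-1,3,4,3,-3,-4,-3,1,3,1,0,-1],[0,0,0,0,0,0,0,0,0,0,0,-1,-1,1,4,4,-2,-7,-7,0,7,7,2,-4,-4,-1,1,1],[0,0,0,0,0,0,0,0,0,0,0,0,0,0,1,0,-1,-3,-1,3,4,3,-3,-4,-3,1,3,1,0,-1]]"

definition L_3_3_0_0 :: "unit \<Rightarrow> int list list" where "L_3_3_0_0 u = [[0,0,0,0,0,0,0,0,0,1,-1,-1,0,0,2,0,0,-1,-1,1],[0,0,0,0,0,0,0,0,0,-1,0,1,2,1,-2,-2,-2,1,2,1,0,-1],[0,0,0,0,0,0,0,0,0,0,1,0,-1,-2,-1,2,2,2,-1,-2,-1,0,1],[0,0,0,0,0,0,0,0,0,0,0,0,-1,1,1,0,0,-2,0,0,1,1,-1]]"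

definition L_3_3_0_1 :: "unit \<Rightarrow> int list list" where "L_3_3_0_1 u = [[],[0,0,0,0,0,0,0,0,0,1,-1,-1,-1,1,3,0,0,-3,-1,1,1,1,-1],[0,0,0,0,0,0,0,0,0,0,-1,0,2,2,0,-4,-3,0,3,4,0,-2,-2,0,1],[0,0,0,0,0,0,0,0,0,0,0,0,1,-1,-1,-1,1,3,0,0,-3,-1,1,1,1,-1]]"

definition L_3_3_1_0 :: "unit \<Rightarrow> int list list" where "L_3_3_1_0 u = [[0,0,0,0,0,0,0,0,1,1,-1,-3,-3,1,4,4,1,-3,-3,-1,1,1],[0,0,0,0,0,0,0,0,-1,-1,0,1,3,3,2,-2,-6,-5,-2,3,5,3,0,-2,-1],[0,0,0,0,0,0,0,0,0,0,1,2,0,-3,-5,-3,2,5,6,2,-2,-3,-3,-1,0,1,1],[0,0,0,0,0,0,0,0,0,0,0,0,0,-1,-1,1,3,3,-1,-4,-4,-1,3,3,1,-1,-1]]"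

definition L_3_3_1_1 :: "unit \<Rightarrow> int list list" where "L_3_3_1_1 u = [[],[0,0,0,0,0,0,0,0,1,0,-1,-2,-2,2,3,4,0,-4,-3,-2,2,2,1,0,-1],[0,0,0,0,0,0,0,0,0,0,-1,-2,2,5,4,-2,-9,-6,-1,7,8,1,-2,-4,-1,0,0,1],[0,0,0,0,0,0,0,0,0,0,0,0,0,1,1,-2,-4,-2,4,7,3,-3,-7,-4,2,4,2,-1,-1]]"

definition L_3_3_1_2 :: "unit \<Rightarrow> int list list" where "L_3_3_1_2 u = [[],[0,0,0,0,0,0,0,0,0,0,0,1,0,-2,-2,0,4,3,0,-3,-4,0,2,2,0,-1],[0,0,0,0,0,0,0,0,0,0,0,0,-1,0,1,2,2,-2,-3,-4,0,4,3,2,-2,-2,-1,0,1],[0,0,0,0,0,0,0,0,0,0,0,0,0,0,0,1,0,-2,-2,0,4,3,0,-3,-4,0,2,2,0,-1]]"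

definition L_3_3_2_0 :: "unit \<Rightarrow> int list list" where "L_3_3_2_0 u = [[0,0,0,0,0,0,0,0,0,1,1,0,-3,-4,-1,3,6,3,-1,-4,-3,0,1,1],[0,0,0,0,0,0,0,0,0,-1,-1,-1,1,3,4,4,-1,-5,-8,-5,1,5,6,2,-1,-2,-1],[0,0,0,0,0,0,0,0,0,0,0,1,2,1,-2,-6,-5,-1,5,8,5,1,-4,-4,-3,-1,1,1,1],[0,0,0,0,0,0,0,0,0,0,0,0,0,0,-1,-1,0,3,4,1,-3,-6,-3,1,4,3,0,-1,-1]]"

definition L_3_3_2_1 :: "unit \<Rightarrow> int list list" where "L_3_3_2_1 u = [[],[0,0,0,0,0,0,0,0,0,1,0,-1,-3,0,2,3,2,-2,-1,-3,1,0,0,1,0,1,-1],[0,0,0,0,0,0,0,0,0,0,0,-1,-1,1,3,4,0,-5,-7,-4,4,7,5,0,-4,-3,-1,1,1],[0,0,0,0,0,0,0,0,0,0,0,0,0,0,1,0,0,-4,-2,2,5,6,-3,-4,-6,0,4,2,1,-2]]"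

definition L_3_3_2_2 :: "unit \<Rightarrow> int list list" where "L_3_3_2_2 u = [[],[0,0,0,0,0,0,0,0,0,0,0,1,1,-2,-3,-3,3,6,4,0,-7,-4,-1,3,3,0,0,-1],[0,0,0,0,0,0,0,0,0,0,0,0,-1,-1,1,3,3,0,-3,-5,-4,0,4,5,3,0,-3,-3,-1,1,1],[0,0,0,0,0,0,0,0,0,0,0,0,0,0,0,1,0,0,-3,-3,1,4,7,0,-4,-6,-3,3,3,2,-1,-1]]"

definition L_3_3_3_0 :: "unit \<Rightarrow> int list list" where "L_3_3_3_0 u = [[0,0,0,0,0,0,0,0,0,0,0,1,1,-1,-3,-2,0,3,4,1,-1,-3,-1,0,0,1],[0,0,0,0,0,0,0,0,0,0,0,-1,-2,0,3,5,2,-2,-4,-4,-1,0,1,1,2,2,0,-1,-1],[0,0,0,0,0,0,0,0,0,0,0,0,1,1,0,-2,-2,-1,-1,0,1,4,4,2,-2,-5,-3,0,2,1],[0,0,0,0,0,0,0,0,0,0,0,0,0,0,0,-1,0,0,1,3,1,-1,-4,-3,0,2,3,1,-1,-1]]"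

definition L_3_3_3_2 :: "unit \<Rightarrow> int list list" where "L_3_3_3_2 u = [[],[0,0,0,0,0,0,0,0,0,0,0,1,1,-2,-3,-2,3,4,2,0,-3,-1,-1,0,-1,0,2,1,0,-1],[0,0,0,0,0,0,0,0,0,0,0,0,-1,-1,1,3,2,-1,-1,-1,-2,-4,-3,2,6,7,1,-5,-5,-1,2,1],[0,0,0,0,0,0,0,0,0,0,0,0,0,0,0,1,0,0,-2,-3,-1,2,7,4,-1,-6,-6,-1,3,4,1,-1,-1]]"

definition L_4_2_2_0 :: "unit \<Rightarrow> int list list" where "L_4_2_2_0 u = [[0,0,0,0,0,0,0,0,0,0,0,0,1,-1,0,-1,0,1,0,1,-1],[0,0,0,0,0,0,0,0,0,0,0,0,0,-1,-1,1,2,2,0,-2,-2,-1,1,1],[0,0,0,0,0,0,0,0,0,0,0,0,0,0,0,2,0,0,-4,-2,0,2,4,0,0,-2],[0,0,0,0,0,0,0,0,0,0,0,0,0,0,0,0,0,-1,-1,1,2,2,0,-2,-2,-1,1,1],[0,0,0,0,0,0,0,0,0,0,0,0,0,0,0,0,0,0,0,0,1,-1,0,-1,0,1,0,1,-1]]"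

definition L_4_2_2_2 :: "unit \<Rightarrow> int list list" where "L_4_2_2_2 u = [[],[0,0,0,0,0,0,0,0,0,0,0,0,0,1,0,-2,-1,0,2,2,0,-1,-2,0,1],[0,0,0,0,0,0,0,0,0,0,0,0,0,0,0,-2,0,2,4,2,-4,-4,-4,2,4,2,0,-2],[0,0,0,0,0,0,0,0,0,0,0,0,0,0,0,0,0,1,1,-1,-3,-3,1,4,4,1,-3,-3,-1,1,1],[0,0,0,0,0,0,0,0,0,0,0,0,0,0,0,0,0,0,0,0,-1,1,0,1,1,-2,0,-2,1,1,0,1,-1]]"

definition L_4_3_1_0 :: "unit \<Rightarrow> int list list" where "L_4_3_1_0 u = [[0,0,0,0,0,0,0,0,0,0,0,0,0,1,0,-1,-2,0,2,1,0,-1],[0,0,0,0,0,0,0,0,0,0,0,0,0,-1,-1,0,2,3,1,-1,-3,-2,0,1,1],[0,0,0,0,0,0,0,0,0,0,0,0,0,0,1,1,1,-2,-3,-3,0,3,3,2,-1,-1,-1],[0,0,0,0,0,0,0,0,0,0,0,0,0,0,0,0,-1,-1,0,2,3,1,-1,-3,-2,0,1,1],[0,0,0,0,0,0,0,0,0,0,0,0,0,0,0,0,0,0,0,1,0,-1,-2,0,2,1,0,-1]]"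

definition L_4_3_1_1 :: "unit \<Rightarrow> int list list" where "L_4_3_1_1 u = [[],[0,0,0,0,0,0,0,0,0,0,0,0,0,1,0,-2,-1,0,2,2,0,-1,-2,0,1],[0,0,0,0,0,0,0,0,0,0,0,0,0,0,-1,-1,1,3,3,-1,-4,-4,-1,3,3,1,-1,-1],[0,0,0,0,0,0,0,0,0,0,0,0,0,0,0,0,1,1,-1,-3,-3,1,4,4,1,-3,-3,-1,1,1],[0,0,0,0,0,0,0,0,0,0,0,0,0,0,0,0,0,0,0,-1,0,2,1,0,-2,-2,0,1,2,0,-1]]"

definition L_4_3_1_2 :: "unit \<Rightarrow> int list list" where "L_4_3_1_2 u = [[],[0,0,0,0,0,0,0,0,0,0,0,0,0,0,0,1,-1,-1,0,0,2,0,0,-1,-1,1],[0,0,0,0,0,0,0,0,0,0,0,0,0,0,0,0,-1,0,1,2,1,-2,-2,-2,1,2,1,0,-1],[0,0,0,0,0,0,0,0,0,0,0,0,0,0,0,0,0,0,1,0,-1,-2,-1,2,2,2,-1,-2,-1,0,1],[0,0,0,0,0,0,0,0,0,0,0,0,0,0,0,0,0,0,0,0,0,-1,1,1,0,0,-2,0,0,1,1,-1]]"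

definition L_4_3_2_0 :: "unit \<Rightarrow> int list list" where "L_4_3_2_0 u = [[0,0,0,0,0,0,0,0,0,0,0,0,0,1,1,0,-2,-3,-1,1,3,2,0,-1,-1],[0,0,0,0,0,0,0,0,0,0,0,0,0,-1,-1,-2,-1,2,5,7,2,-3,-7,-6,-1,2,3,1],[0,0,0,0,0,0,0,0,0,0,0,0,0,0,0,2,3,2,-1,-6,-7,-6,0,6,7,6,1,-2,-3,-2],[0,0,0,0,0,0,0,0,0,0,0,0,0,0,0,0,0,-1,-3,-2,1,6,7,3,-2,-7,-5,-2,1,2,1,1],[0,0,0,0,0,0,0,0,0,0,0,0,0,0,0,0,0,0,0,0,1,1,0,-2,-3,-1,1,3,2,0,-1,-1]]"

definition L_4_3_2_1 :: "unit \<Rightarrow> int list list" where "L_4_3_2_1 u = [[],[0,0,0,0,0,0,0,0,0,0,0,0,0,1,0,-1,-1,-1,0,1,2,1,0,-1,-1,-1,0,1],[0,0,0,0,0,0,0,0,0,0,0,0,0,0,0,-2,-1,1,4,5,0,-3,-7,-4,1,3,4,1,0,-1,-1],[0,0,0,0,0,0,0,0,0,0,0,0,0,0,0,0,0,1,2,0,-3,-6,-3,3,7,7,0,-4,-5,-2,1,1,1],[0,0,0,0,0,0,0,0,0,0,0,0,0,0,0,0,0,0,0,0,-1,0,0,2,3,-1,-2,-4,-1,2,2,2,-1,-1]]"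

definition L_4_3_2_2 :: "unit \<Rightarrow> int list list" where "L_4_3_2_2 u = [[],[0,0,0,0,0,0,0,0,0,0,0,0,0,0,0,2,0,-2,-3,-3,3,4,4,0,-4,-2,-1,1,1],[0,0,0,0,0,0,0,0,0,0,0,0,0,0,0,0,-2,-1,0,3,6,3,0,-8,-8,-3,2,7,4,1,-2,-2],[0,0,0,0,0,0,0,0,0,0,0,0,0,0,0,0,0,0,1,2,1,-3,-6,-5,1,7,8,4,-3,-5,-4,-1,1,1,1],[0,0,0,0,0,0,0,0,0,0,0,0,0,0,0,0,0,0,0,0,0,-1,0,0,1,3,1,-1,-4,-3,0,2,3,1,-1,-1]]"

definition L_4_3_3_0 :: "unit \<Rightarrow> int list list" where "L_4_3_3_0 u = [[0,0,0,0,0,0,0,0,0,0,0,0,0,0,0,2,0,0,-3,-2,-1,1,3,1,1,-1,0,-1],[0,0,0,0,0,0,0,0,0,0,0,0,0,0,0,-2,-2,-1,1,4,4,4,1,-2,-4,-5,-3,0,2,2,1],[0,0,0,0,0,0,0,0,0,0,0,0,0,0,0,0,2,1,3,0,-1,-6,-7,-5,0,5,7,6,1,0,-3,-1,-2],[0,0,0,0,0,0,0,0,0,0,0,0,0,0,0,0,0,0,-1,-2,-2,0,3,5,4,2,-1,-4,-4,-4,-1,1,2,2],[0,0,0,0,0,0,0,0,0,0,0,0,0,0,0,0,0,0,0,0,0,1,0,1,-1,-1,-3,-1,1,2,3,0,0,-2]]"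

definition L_4_3_3_2 :: "unit \<Rightarrow> int list list" where "L_4_3_3_2 u = [[],[0,0,0,0,0,0,0,0,0,0,0,0,0,0,0,2,0,-1,-2,-3,0,0,3,3,2,1,-2,-3,-2,0,1,1],[0,0,0,0,0,0,0,0,0,0,0,0,0,0,0,0,-2,-1,-1,1,4,6,6,-1,-7,-10,-7,-1,6,6,4,1,-1,-1,-2],[0,0,0,0,0,0,0,0,0,0,0,0,0,0,0,0,0,0,1,2,2,-1,-5,-7,-4,1,6,8,6,3,-3,-5,-6,-3,1,2,2],[0,0,0,0,0,0,0,0,0,0,0,0,0,0,0,0,0,0,0,0,0,-1,0,-1,1,2,3,2,-2,-3,-6,-1,1,4,3,0,0,-2]]"

definition L_5_3_2_0 :: "unit \<Rightarrow> int list list" where "L_5_3_2_0 u = [[0,0,0,0,0,0,0,0,0,0,0,0,0,0,0,0,0,0,0,1,0,-1,-1,0,1],[0,0,0,0,0,0,0,0,0,0,0,0,0,0,0,0,0,0,0,-1,-1,-1,1,3,2,0,-2,-1],[0,0,0,0,0,0,0,0,0,0,0,0,0,0,0,0,0,0,0,0,1,2,2,-1,-3,-4,-2,1,2,2],[0,0,0,0,0,0,0,0,0,0,0,0,0,0,0,0,0,0,0,0,0,0,-2,-2,-1,2,4,3,1,-2,-2,-1],[0,0,0,0,0,0,0,0,0,0,0,0,0,0,0,0,0,0,0,0,0,0,0,0,1,2,0,-2,-3,-1,1,1,1],[0,0,0,0,0,0,0,0,0,0,0,0,0,0,0,0,0,0,0,0,0,0,0,0,0,0,0,-1,0,1,1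,0,-1]]"

definition L_5_3_2_1 :: "unit \<Rightarrow> int list list" where "L_5_3_2_1 u = [[],[0,0,0,0,0,0,0,0,0,0,0,0,0,0,0,0,0,0,0,1,-1,0,-1,0,1,0,1,-1],[0,0,0,0,0,0,0,0,0,0,0,0,0,0,0,0,0,0,0,0,-1,-1,1,2,2,0,-2,-2,-1,1,1],[0,0,0,0,0,0,0,0,0,0,0,0,0,0,0,0,0,0,0,0,0,0,2,0,0,-4,-2,0,2,4,0,0,-2],[0,0,0,0,0,0,0,0,0,0,0,0,0,0,0,0,0,0,0,0,0,0,0,0,-1,-1,1,2,2,0,-2,-2,-1,1,1],[0,0,0,0,0,0,0,0,0,0,0,0,0,0,0,0,0,0,0,0,0,0,0,0,0,0,0,1,-1,0,-1,0,1,0,1,-1]]"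

definition L_5_3_2_2 :: "unit \<Rightarrow> int list list" where "L_5_3_2_2 u = [[],[0,0,0,0,0,0,0,0,0,0,0,0,0,0,0,0,0,0,0,0,1,0,-1,-2,0,2,1,0,-1],[0,0,0,0,0,0,0,0,0,0,0,0,0,0,0,0,0,0,0,0,0,-1,-2,1,3,3,1,-3,-3,-2,1,2],[0,0,0,0,0,0,0,0,0,0,0,0,0,0,0,0,0,0,0,0,0,0,0,2,1,0,-4,-4,-1,2,5,2,0,-2,-1],[0,0,0,0,0,0,0,0,0,0,0,0,0,0,0,0,0,0,0,0,0,0,0,0,0,-1,-1,0,2,3,1,-1,-3,-2,0,1,1],[0,0,0,0,0,0,0,0,0,0,0,0,0,0,0,0,0,0,0,0,0,0,0,0,0,0,0,0,1,-1,0,0,-1,0,0,2,0,-1]]"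

definition L_5_3_3_0 :: "unit \<Rightarrow> int list list" where "L_5_3_3_0 u = [[0,0,0,0,0,0,0,0,0,0,0,0,0,0,0,0,0,0,0,0,1,1,-1,-1,-1,0,0,0,1],[0,0,0,0,0,0,0,0,0,0,0,0,0,0,0,0,0,0,0,0,-1,-2,-2,0,2,3,3,2,0,-2,-2,-1],[0,0,0,0,0,0,0,0,0,0,0,0,0,0,0,0,0,0,0,0,0,1,3,3,2,-1,-4,-6,-5,-2,1,3,3,2],[0,0,0,0,0,0,0,0,0,0,0,0,0,0,0,0,0,0,0,0,0,0,0,-2,-3,-3,-1,2,5,6,4,1,-2,-3,-3,-1],[0,0,0,0,0,0,0,0,0,0,0,0,0,0,0,0,0,0,0,0,0,0,0,0,0,1,2,2,0,-2,-3,-3,-2,0,2,2,1],[0,0,0,0,0,0,0,0,0,0,0,0,0,0,0,0,0,0,0,0,0,0,0,0,0,0,0,0,-1,0,0,0,1,1,1,-1,-1]]"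

definition L_5_3_3_2 :: "unit \<Rightarrow> int list list" where "L_5_3_3_2 u = [[],[0,0,0,0,0,0,0,0,0,0,0,0,0,0,0,0,0,0,0,0,1,1,0,-2,-2,-1,0,1,2,2,0,-1,-1],[0,0,0,0,0,0,0,0,0,0,0,0,0,0,0,0,0,0,0,0,0,-1,-3,-2,1,4,6,5,1,-4,-6,-5,-2,1,3,2],[0,0,0,0,0,0,0,0,0,0,0,0,0,0,0,0,0,0,0,0,0,0,0,2,3,3,-1,-5,-8,-7,-2,4,8,7,4,-1,-3,-3,-1],[0,0,0,0,0,0,0,0,0,0,0,0,0,0,0,0,0,0,0,0,0,0,0,0,0,-1,-2,-2,0,3,5,5,2,-2,-5,-5,-3,0,2,2,1],[0,0,0,0,0,0,0,0,0,0,0,0,0,0,0,0,0,0,0,0,0,0,0,0,0,0,0,0,1,0,0,0,-1,-2,-1,1,1,1,1,1,-1,-1]]"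

definition L_6_3_3_0 :: "unit \<Rightarrow> int list list" where "L_6_3_3_0 u = [[0,0,0,0,0,0,0,0,0,0,0,0,0,0,0,0,0,0,0,0,0,0,0,0,0,0,0,1,-1],[0,0,0,0,0,0,0,0,0,0,0,0,0,0,0,0,0,0,0,0,0,0,0,0,0,0,0,-1,-1,0,1,1],[0,0,0,0,0,0,0,0,0,0,0,0,0,0,0,0,0,0,0,0,0,0,0,0,0,0,0,0,2,1,2,-2,-1,-2],[0,0,0,0,0,0,0,0,0,0,0,0,0,0,0,0,0,0,0,0,0,0,0,0,0,0,0,0,0,-1,-3,-1,0,1,3,1],[0,0,0,0,0,0,0,0,0,0,0,0,0,0,0,0,0,0,0,0,0,0,0,0,0,0,0,0,0,0,0,2,1,2,-2,-1,-2],[0,0,0,0,0,0,0,0,0,0,0,0,0,0,0,0,0,0,0,0,0,0,0,0,0,0,0,0,0,0,0,0,0,-1,-1,0,1,1],[0,0,0,0,0,0,0,0,0,0,0,0,0,0,0,0,0,0,0,0,0,0,0,0,0,0,0,0,0,0,0,0,0,0,0,0,1,-1]]"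

definition L_6_3_3_2 :: "unit \<Rightarrow> int list list" where "L_6_3_3_2 u = [[],[0,0,0,0,0,0,0,0,0,0,0,0,0,0,0,0,0,0,0,0,0,0,0,0,0,0,0,1,0,-1,-1,0,1],[0,0,0,0,0,0,0,0,0,0,0,0,0,0,0,0,0,0,0,0,0,0,0,0,0,0,0,0,-2,-1,0,3,3,0,-1,-2],[0,0,0,0,0,0,0,0,0,0,0,0,0,0,0,0,0,0,0,0,0,0,0,0,0,0,0,0,0,1,3,1,-1,-4,-4,-1,1,3,1],[0,0,0,0,0,0,0,0,0,0,0,0,0,0,0,0,0,0,0,0,0,0,0,0,0,0,0,0,0,0,0,-2,-1,-2,2,3,3,2,-2,-1,-2],[0,0,0,0,0,0,0,0,0,0,0,0,0,0,0,0,0,0,0,0,0,0,0,0,0,0,0,0,0,0,0,0,0,1,1,0,-1,-1,-1,-1,0,1,1],[0,0,0,0,0,0,0,0,0,0,0,0,0,0,0,0,0,0,0,0,0,0,0,0,0,0,0,0,0,0,0,0,0,0,0,0,-1,1,0,0,0,0,1,-1]]"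

definition tabl :: "(unit \<Rightarrow> int list list) list list list list" where "tabl = [[[[L_0_0_0_0,(\<lambda>u. []),(\<lambda>u. [])],[(\<lambda>u. []),(\<lambda>u. []),(\<lambda>u. [])],[(\<lambda>u. []),(\<lambda>u. []),(\<lambda>u. [])],[(\<lambda>u. []),(\<lambda>u. []),(\<lambda>u. [])]],[[(\<lambda>u. []),(\<lambda>u. []),(\<lambda>u. [])],[(\<lambda>u. []),(\<lambda>u. []),(\<lambda>u. [])],[(\<lambda>u. []),(\<lambda>u. []),(\<lambda>u. [])],[(\<lambda>u. []),(\<lambda>u. []),(\<lambda>u. [])]],[[(\<lambda>u. []),(\<lambda>u. []),(\<lambda>u. [])],[(\<lambda>u. []),(\<lambda>u. []),(\<lambda>u. [])],[(\<lambda>u. []),(\<lambda>u. []),(\<lambda>u. [])],[(\<lambda>u. []),(\<lambda>u. []),(\<lambda>u. [])]],[[(\<lambda>u. []),(\<lambda>u. []),(\<lambda>u. [])],[(\<lambda>u. []),(\<lambda>u. []),(\<lambda>u. [])],[(\<lambda>u. []),(\<lambda>u. []),(\<lambda>u. [])],[(\<lambda>u. []),(\<lambda>u. []),(\<lambda>u. [])]]],[[[(\<lambda>u. []),(\<lambda>u. []),(\<lambda>u. [])],[(\<lambda>u. []),(\<lambda>u. []),(\<lambda>u. [])],[(\<lambda>u. []),(\<lambda>u. []),(\<lambda>u. [])],[(\<lambda>u. []),(\<lambda>u. []),(\<lambda>u. [])]],[[L_1_1_0_0,L_1_1_0_1,(\<lambda>u. [])],[(\<lambda>u. []),(\<lambda>u.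 []),(\<lambda>u. [])],[(\<lambda>u. []),(\<lambda>u. []),(\<lambda>u. [])],[(\<lambda>u. []),(\<lambda>u. []),(\<lambda>u. [])]],[[L_1_2_0_0,L_1_2_0_1,(\<lambda>u. [])],[(\<lambda>u. []),(\<lambda>u. []),(\<lambda>u. [])],[(\<lambda>u. []),(\<lambda>u. []),(\<lambda>u. [])],[(\<lambda>u. []),(\<lambda>u. []),(\<lambda>u. [])]],[[L_1_3_0_0,L_1_3_0_1,(\<lambda>u. [])],[(\<lambda>u. []),(\<lambda>u. []),(\<lambda>u. [])],[(\<lambda>u. []),(\<lambda>u. []),(\<lambda>u. [])],[(\<lambda>u. []),(\<lambda>u. []),(\<lambda>u. [])]]],[[[(\<lambda>u. []),(\<lambda>u. []),(\<lambda>u. [])],[(\<lambda>u. []),(\<lambda>u. []),(\<lambda>u. [])],[(\<lambda>u. []),(\<lambda>u. []),(\<lambda>u. [])],[(\<lambda>u. []),(\<lambda>u. []),(\<lambda>u. [])]],[[(\<lambda>u. []),(\<lambda>u. []),(\<lambda>u. [])],[L_2_1_1_0,(\<lambda>u. []),L_2_1_1_2],[(\<lambda>u. []),(\<lambda>u. []),(\<lambda>u. [])],[(\<lambda>u. []),(\<lambda>u. []),(\<lambda>u. [])]],[[L_2_2_0_0,L_2_2_0_1,(\<lambda>u. [])],[L_2_2_1_0,L_2_2_1_1,L_2_2_1_2],[L_2_2_2_0,(\<lambda>u. []),L_2_2_2_2],[(\<lambda>u. []),(\<lambda>u. []),(\<lambda>u. [])]],[[L_2_3_0_0,L_2_3_0_1,(\<lambda>u.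 [])],[L_2_3_1_0,L_2_3_1_1,L_2_3_1_2],[L_2_3_2_0,L_2_3_2_1,L_2_3_2_2],[L_2_3_3_0,(\<lambda>u. []),L_2_3_3_2]]],[[[(\<lambda>u. []),(\<lambda>u. []),(\<lambda>u. [])],[(\<lambda>u. []),(\<lambda>u. []),(\<lambda>u. [])],[(\<lambda>u. []),(\<lambda>u. []),(\<lambda>u. [])],[(\<lambda>u. []),(\<lambda>u. []),(\<lambda>u. [])]],[[(\<lambda>u. []),(\<lambda>u. []),(\<lambda>u. [])],[(\<lambda>u. []),(\<lambda>u. []),(\<lambda>u. [])],[(\<lambda>u. []),(\<lambda>u. []),(\<lambda>u. [])],[(\<lambda>u. []),(\<lambda>u. []),(\<lambda>u. [])]],[[(\<lambda>u. []),(\<lambda>u. []),(\<lambda>u. [])],[L_3_2_1_0,L_3_2_1_1,L_3_2_1_2],[L_3_2_2_0,(\<lambda>u. []),L_3_2_2_2],[(\<lambda>u. []),(\<lambda>u. []),(\<lambda>u. [])]],[[L_3_3_0_0,L_3_3_0_1,(\<lambda>u. [])],[L_3_3_1_0,L_3_3_1_1,L_3_3_1_2],[L_3_3_2_0,L_3_3_2_1,L_3_3_2_2],[L_3_3_3_0,(\<lambda>u. []),L_3_3_3_2]]],[[[(\<lambda>u. []),(\<lambda>u. []),(\<lambda>u. [])],[(\<lambda>u. []),(\<lambda>u. []),(\<lambda>u. [])],[(\<lambda>u. []),(\<lambda>u. []),(\<lambda>u. [])],[(\<lambda>u. []),(\<lambda>u. []),(\<lambda>u. [])]],[[(\<lambda>u.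 []),(\<lambda>u. []),(\<lambda>u. [])],[(\<lambda>u. []),(\<lambda>u. []),(\<lambda>u. [])],[(\<lambda>u. []),(\<lambda>u. []),(\<lambda>u. [])],[(\<lambda>u. []),(\<lambda>u. []),(\<lambda>u. [])]],[[(\<lambda>u. []),(\<lambda>u. []),(\<lambda>u. [])],[(\<lambda>u. []),(\<lambda>u. []),(\<lambda>u. [])],[L_4_2_2_0,(\<lambda>u. []),L_4_2_2_2],[(\<lambda>u. []),(\<lambda>u. []),(\<lambda>u. [])]],[[(\<lambda>u. []),(\<lambda>u. []),(\<lambda>u. [])],[L_4_3_1_0,L_4_3_1_1,L_4_3_1_2],[L_4_3_2_0,L_4_3_2_1,L_4_3_2_2],[L_4_3_3_0,(\<lambda>u. []),L_4_3_3_2]]],[[[(\<lambda>u. []),(\<lambda>u. []),(\<lambda>u. [])],[(\<lambda>u. []),(\<lambda>u. []),(\<lambda>u. [])],[(\<lambda>u. []),(\<lambda>u. []),(\<lambda>u. [])],[(\<lambda>u. []),(\<lambda>u. []),(\<lambda>u. [])]],[[(\<lambda>u. []),(\<lambda>u. []),(\<lambda>u. [])],[(\<lambda>u. []),(\<lambda>u. []),(\<lambda>u. [])],[(\<lambda>u. []),(\<lambda>u. []),(\<lambda>u. [])],[(\<lambda>u. []),(\<lambda>u. []),(\<lambda>u. [])]],[[(\<lambda>u. []),(\<lambda>u. []),(\<lambda>u. [])],[(\<lambda>u. []),(\<lambda>u. []),(\<lambda>u. [])],[(\<lambda>u. []),(\<lambda>u. []),(\<lambda>u. [])],[(\<lambda>u.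 []),(\<lambda>u. []),(\<lambda>u. [])]],[[(\<lambda>u. []),(\<lambda>u. []),(\<lambda>u. [])],[(\<lambda>u. []),(\<lambda>u. []),(\<lambda>u. [])],[L_5_3_2_0,L_5_3_2_1,L_5_3_2_2],[L_5_3_3_0,(\<lambda>u. []),L_5_3_3_2]]],[[[(\<lambda>u. []),(\<lambda>u. []),(\<lambda>u. [])],[(\<lambda>u. []),(\<lambda>u. []),(\<lambda>u. [])],[(\<lambda>u. []),(\<lambda>u. []),(\<lambda>u. [])],[(\<lambda>u. []),(\<lambda>u. []),(\<lambda>u. [])]],[[(\<lambda>u. []),(\<lambda>u. []),(\<lambda>u. [])],[(\<lambda>u. []),(\<lambda>u. []),(\<lambda>u. [])],[(\<lambda>u. []),(\<lambda>u. []),(\<lambda>u. [])],[(\<lambda>u. []),(\<lambda>u. []),(\<lambda>u. [])]],[[(\<lambda>u. []),(\<lambda>u. []),(\<lambda>u. [])],[(\<lambda>u. []),(\<lambda>u. []),(\<lambda>u. [])],[(\<lambda>u. []),(\<lambda>u. []),(\<lambda>u. [])],[(\<lambda>u. []),(\<lambda>u. []),(\<lambda>u. [])]],[[(\<lambda>u. []),(\<lambda>u. []),(\<lambda>u. [])],[(\<lambda>u. []),(\<lambda>u. []),(\<lambda>u. [])],[(\<lambda>u. []),(\<lambda>u. []),(\<lambda>u. [])],[L_6_3_3_0,(\<lambda>u. []),L_6_3_3_2]]]]"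

definition T_1_0_0_0_0 :: "unit \<Rightarrow> int list" where "T_1_0_0_0_0 u = [1,-2,-1,2,2,2,-5,-2,0,2,5,-2,-2,-2,1,2,-1]"

definition T_1_1_1_0_1 :: "unit \<Rightarrow> int list" where "T_1_1_1_0_1 u = [0,1,-2,-1,2,2,2,-5,-2,0,2,5,-2,-2,-2,1,2,-1]"

definition T_1_2_1_1_2 :: "unit \<Rightarrow> int list" where "T_1_2_1_1_2 u = [0,0,0,1,-2,-1,2,2,2,-5,-2,0,2,5,-2,-2,-2,1,2,-1]"

definition T_2_0_0_0_0 :: "unit \<Rightarrow> int list" where "T_2_0_0_0_0 u = [1,-2,-1,2,2,2,-5,-2,0,2,5,-2,-2,-2,1,2,-1]"

definition T_2_1_1_0_0 :: "unit \<Rightarrow> int list" where "T_2_1_1_0_0 u = [0,1,-2,-1,2,2,2,-5,-2,0,2,5,-2,-2,-2,1,2,-1]"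

definition T_2_1_1_0_1 :: "unit \<Rightarrow> int list" where "T_2_1_1_0_1 u = [0,0,1,-2,-1,2,2,2,-5,-2,0,2,5,-2,-2,-2,1,2,-1]"

definition T_2_1_2_0_1 :: "unit \<Rightarrow> int list" where "T_2_1_2_0_1 u = [0,0,1,-2,-1,2,2,2,-5,-2,0,2,5,-2,-2,-2,1,2,-1]"

definition T_2_2_1_1_0 :: "unit \<Rightarrow> int list" where "T_2_2_1_1_0 u = [0,0,0,1,-2,-1,2,2,2,-5,-2,0,2,5,-2,-2,-2,1,2,-1]"

definition T_2_2_1_1_2 :: "unit \<Rightarrow> int list" where "T_2_2_1_1_2 u = [0,0,0,0,1,-1,-3,1,4,4,-3,-7,-2,2,7,3,-4,-4,-1,3,1,-1]"

definition T_2_2_2_0_1 :: "unit \<Rightarrow> int list" where "T_2_2_2_0_1 u = [0,0,0,0,1,-2,-1,2,2,2,-5,-2,0,2,5,-2,-2,-2,1,2,-1]"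

definition T_2_2_2_1_1 :: "unit \<Rightarrow> int list" where "T_2_2_2_1_1 u = [0,0,0,0,1,-1,-3,1,4,4,-3,-7,-2,2,7,3,-4,-4,-1,3,1,-1]"

definition T_2_2_2_1_2 :: "unit \<Rightarrow> int list" where "T_2_2_2_1_2 u = [0,0,0,0,0,0,1,-2,-1,2,2,2,-5,-2,0,2,5,-2,-2,-2,1,2,-1]"

definition T_2_2_2_2_2 :: "unit \<Rightarrow> int list" where "T_2_2_2_2_2 u = [0,0,0,0,0,0,1,-2,-1,2,2,2,-5,-2,0,2,5,-2,-2,-2,1,2,-1]"

definition T_2_3_2_1_1 :: "unit \<Rightarrow> int list" where "T_2_3_2_1_1 u = [0,0,0,0,0,0,0,1,-2,-1,2,2,2,-5,-2,0,2,5,-2,-2,-2,1,2,-1]"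

definition T_2_3_2_1_2 :: "unit \<Rightarrow> int list" where "T_2_3_2_1_2 u = [0,0,0,0,0,0,0,0,1,-2,-1,2,2,2,-5,-2,0,2,5,-2,-2,-2,1,2,-1]"

definition T_2_3_2_2_2 :: "unit \<Rightarrow> int list" where "T_2_3_2_2_2 u = [0,0,0,0,0,0,0,0,1,-1,-2,-1,3,6,-1,-5,-7,0,7,5,1,-6,-3,1,2,1,-1]"

definition T_2_4_2_2_2 :: "unit \<Rightarrow> int list" where "T_2_4_2_2_2 u = [0,0,0,0,0,0,0,0,0,0,0,0,1,-2,-1,2,2,2,-5,-2,0,2,5,-2,-2,-2,1,2,-1]"

definition ttabl :: "(unit \<Rightarrow> int list) list list list list list" where "ttabl = [[[[[T_1_0_0_0_0,(\<lambda>u. []),(\<lambda>u. [])],[(\<lambda>u. []),(\<lambda>u. []),(\<lambda>u. [])],[(\<lambda>u. []),(\<lambda>u. []),(\<lambda>u. [])],[(\<lambda>u. []),(\<lambda>u. []),(\<lambda>u. [])]],[[(\<lambda>u. []),(\<lambda>u. []),(\<lambda>u. [])],[(\<lambda>u. []),(\<lambda>u. []),(\<lambda>u. [])],[(\<lambda>u. []),(\<lambda>u. []),(\<lambda>u. [])],[(\<lambda>u. []),(\<lambda>u. []),(\<lambda>u. [])]],[[(\<lambda>u. []),(\<lambda>u. []),(\<lambda>u. [])],[(\<lambda>u. []),(\<lambda>u. []),(\<lambda>u. [])],[(\<lambda>u. []),(\<lambda>u. []),(\<lambda>u. [])],[(\<lambda>u. []),(\<lambda>u. []),(\<lambda>u.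 [])]],[[(\<lambda>u. []),(\<lambda>u. []),(\<lambda>u. [])],[(\<lambda>u. []),(\<lambda>u. []),(\<lambda>u. [])],[(\<lambda>u. []),(\<lambda>u. []),(\<lambda>u. [])],[(\<lambda>u. []),(\<lambda>u. []),(\<lambda>u. [])]]],[[[(\<lambda>u. []),(\<lambda>u. []),(\<lambda>u. [])],[(\<lambda>u. []),(\<lambda>u. []),(\<lambda>u. [])],[(\<lambda>u. []),(\<lambda>u. []),(\<lambda>u. [])],[(\<lambda>u. []),(\<lambda>u. []),(\<lambda>u. [])]],[[(\<lambda>u. []),T_1_1_1_0_1,(\<lambda>u. [])],[(\<lambda>u. []),(\<lambda>u. []),(\<lambda>u. [])],[(\<lambda>u. []),(\<lambda>u. []),(\<lambda>u. [])],[(\<lambda>u. []),(\<lambda>u. []),(\<lambda>u. [])]],[[(\<lambda>u. []),(\<lambda>u. []),(\<lambda>u. [])],[(\<lambda>u. []),(\<lambda>u. []),(\<lambda>u. [])],[(\<lambda>u. []),(\<lambda>u. []),(\<lambda>u. [])],[(\<lambda>u. []),(\<lambda>u. []),(\<lambda>u. [])]],[[(\<lambda>u. []),(\<lambda>u. []),(\<lambda>u. [])],[(\<lambda>u. []),(\<lambda>u. []),(\<lambda>u. [])],[(\<lambda>u. []),(\<lambda>u. []),(\<lambda>u. [])],[(\<lambda>u. []),(\<lambda>u. []),(\<lambda>u. [])]]],[[[(\<lambda>u. []),(\<lambda>u. []),(\<lambda>u. [])],[(\<lambda>u. []),(\<lambda>u. []),(\<lambda>u. [])],[(\<lambda>u.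 []),(\<lambda>u. []),(\<lambda>u. [])],[(\<lambda>u. []),(\<lambda>u. []),(\<lambda>u. [])]],[[(\<lambda>u. []),(\<lambda>u. []),(\<lambda>u. [])],[(\<lambda>u. []),(\<lambda>u. []),T_1_2_1_1_2],[(\<lambda>u. []),(\<lambda>u. []),(\<lambda>u. [])],[(\<lambda>u. []),(\<lambda>u. []),(\<lambda>u. [])]],[[(\<lambda>u. []),(\<lambda>u. []),(\<lambda>u. [])],[(\<lambda>u. []),(\<lambda>u. []),(\<lambda>u. [])],[(\<lambda>u. []),(\<lambda>u. []),(\<lambda>u. [])],[(\<lambda>u. []),(\<lambda>u. []),(\<lambda>u. [])]],[[(\<lambda>u. []),(\<lambda>u. []),(\<lambda>u. [])],[(\<lambda>u. []),(\<lambda>u. []),(\<lambda>u. [])],[(\<lambda>u. []),(\<lambda>u. []),(\<lambda>u. [])],[(\<lambda>u. []),(\<lambda>u. []),(\<lambda>u. [])]]],[[[(\<lambda>u. []),(\<lambda>u. []),(\<lambda>u. [])],[(\<lambda>u. []),(\<lambda>u. []),(\<lambda>u. [])],[(\<lambda>u. []),(\<lambda>u. []),(\<lambda>u. [])],[(\<lambda>u. []),(\<lambda>u. []),(\<lambda>u. [])]],[[(\<lambda>u. []),(\<lambda>u. []),(\<lambda>u. [])],[(\<lambda>u. []),(\<lambda>u. []),(\<lambda>u. [])],[(\<lambda>u. []),(\<lambda>u. []),(\<lambda>u. [])],[(\<lambda>u. []),(\<lambda>u. []),(\<lambda>u. [])]],[[(\<lambda>u. []),(\<lambda>u. []),(\<lambda>u.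 [])],[(\<lambda>u. []),(\<lambda>u. []),(\<lambda>u. [])],[(\<lambda>u. []),(\<lambda>u. []),(\<lambda>u. [])],[(\<lambda>u. []),(\<lambda>u. []),(\<lambda>u. [])]],[[(\<lambda>u. []),(\<lambda>u. []),(\<lambda>u. [])],[(\<lambda>u. []),(\<lambda>u. []),(\<lambda>u. [])],[(\<lambda>u. []),(\<lambda>u. []),(\<lambda>u. [])],[(\<lambda>u. []),(\<lambda>u. []),(\<lambda>u. [])]]],[[[(\<lambda>u. []),(\<lambda>u. []),(\<lambda>u. [])],[(\<lambda>u. []),(\<lambda>u. []),(\<lambda>u. [])],[(\<lambda>u. []),(\<lambda>u. []),(\<lambda>u. [])],[(\<lambda>u. []),(\<lambda>u. []),(\<lambda>u. [])]],[[(\<lambda>u. []),(\<lambda>u. []),(\<lambda>u. [])],[(\<lambda>u. []),(\<lambda>u. []),(\<lambda>u. [])],[(\<lambda>u. []),(\<lambda>u. []),(\<lambda>u. [])],[(\<lambda>u. []),(\<lambda>u. []),(\<lambda>u. [])]],[[(\<lambda>u. []),(\<lambda>u. []),(\<lambda>u. [])],[(\<lambda>u. []),(\<lambda>u. []),(\<lambda>u. [])],[(\<lambda>u. []),(\<lambda>u. []),(\<lambda>u. [])],[(\<lambda>u. []),(\<lambda>u. []),(\<lambda>u. [])]],[[(\<lambda>u. []),(\<lambda>u. []),(\<lambda>u. [])],[(\<lambda>u. []),(\<lambda>u. []),(\<lambda>u. [])],[(\<lambda>u. []),(\<lambda>u. []),(\<lambda>u. [])],[(\<lambda>u. []),(\<lambda>u.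 []),(\<lambda>u. [])]]],[[[(\<lambda>u. []),(\<lambda>u. []),(\<lambda>u. [])],[(\<lambda>u. []),(\<lambda>u. []),(\<lambda>u. [])],[(\<lambda>u. []),(\<lambda>u. []),(\<lambda>u. [])],[(\<lambda>u. []),(\<lambda>u. []),(\<lambda>u. [])]],[[(\<lambda>u. []),(\<lambda>u. []),(\<lambda>u. [])],[(\<lambda>u. []),(\<lambda>u. []),(\<lambda>u. [])],[(\<lambda>u. []),(\<lambda>u. []),(\<lambda>u. [])],[(\<lambda>u. []),(\<lambda>u. []),(\<lambda>u. [])]],[[(\<lambda>u. []),(\<lambda>u. []),(\<lambda>u. [])],[(\<lambda>u. []),(\<lambda>u. []),(\<lambda>u. [])],[(\<lambda>u. []),(\<lambda>u. []),(\<lambda>u. [])],[(\<lambda>u. []),(\<lambda>u. []),(\<lambda>u. [])]],[[(\<lambda>u. []),(\<lambda>u. []),(\<lambda>u. [])],[(\<lambda>u. []),(\<lambda>u. []),(\<lambda>u. [])],[(\<lambda>u. []),(\<lambda>u. []),(\<lambda>u. [])],[(\<lambda>u. []),(\<lambda>u. []),(\<lambda>u. [])]]],[[[(\<lambda>u. []),(\<lambda>u. []),(\<lambda>u. [])],[(\<lambda>u. []),(\<lambda>u. []),(\<lambda>u. [])],[(\<lambda>u. []),(\<lambda>u. []),(\<lambda>u. [])],[(\<lambda>u. []),(\<lambda>u. []),(\<lambda>u. [])]],[[(\<lambda>u. []),(\<lambda>u. []),(\<lambda>u. [])],[(\<lambda>u. []),(\<lambda>u. []),(\<lambda>u. [])],[(\<lambda>u.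 []),(\<lambda>u. []),(\<lambda>u. [])],[(\<lambda>u. []),(\<lambda>u. []),(\<lambda>u. [])]],[[(\<lambda>u. []),(\<lambda>u. []),(\<lambda>u. [])],[(\<lambda>u. []),(\<lambda>u. []),(\<lambda>u. [])],[(\<lambda>u. []),(\<lambda>u. []),(\<lambda>u. [])],[(\<lambda>u. []),(\<lambda>u. []),(\<lambda>u. [])]],[[(\<lambda>u. []),(\<lambda>u. []),(\<lambda>u. [])],[(\<lambda>u. []),(\<lambda>u. []),(\<lambda>u. [])],[(\<lambda>u. []),(\<lambda>u. []),(\<lambda>u. [])],[(\<lambda>u. []),(\<lambda>u. []),(\<lambda>u. [])]]]],[[[[T_2_0_0_0_0,(\<lambda>u. []),(\<lambda>u. [])],[(\<lambda>u. []),(\<lambda>u. []),(\<lambda>u. [])],[(\<lambda>u. []),(\<lambda>u. []),(\<lambda>u. [])],[(\<lambda>u. []),(\<lambda>u. []),(\<lambda>u. [])]],[[(\<lambda>u. []),(\<lambda>u. []),(\<lambda>u. [])],[(\<lambda>u. []),(\<lambda>u. []),(\<lambda>u. [])],[(\<lambda>u. []),(\<lambda>u. []),(\<lambda>u. [])],[(\<lambda>u. []),(\<lambda>u. []),(\<lambda>u. [])]],[[(\<lambda>u. []),(\<lambda>u. []),(\<lambda>u. [])],[(\<lambda>u. []),(\<lambda>u. []),(\<lambda>u. [])],[(\<lambda>u. []),(\<lambda>u. []),(\<lambda>u. [])],[(\<lambda>u. []),(\<lambda>u. []),(\<lambda>u. [])]],[[(\<lambda>u. []),(\<lambda>u. []),(\<lambda>u.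 [])],[(\<lambda>u. []),(\<lambda>u. []),(\<lambda>u. [])],[(\<lambda>u. []),(\<lambda>u. []),(\<lambda>u. [])],[(\<lambda>u. []),(\<lambda>u. []),(\<lambda>u. [])]]],[[[(\<lambda>u. []),(\<lambda>u. []),(\<lambda>u. [])],[(\<lambda>u. []),(\<lambda>u. []),(\<lambda>u. [])],[(\<lambda>u. []),(\<lambda>u. []),(\<lambda>u. [])],[(\<lambda>u. []),(\<lambda>u. []),(\<lambda>u. [])]],[[T_2_1_1_0_0,T_2_1_1_0_1,(\<lambda>u. [])],[(\<lambda>u. []),(\<lambda>u. []),(\<lambda>u. [])],[(\<lambda>u. []),(\<lambda>u. []),(\<lambda>u. [])],[(\<lambda>u. []),(\<lambda>u. []),(\<lambda>u. [])]],[[(\<lambda>u. []),T_2_1_2_0_1,(\<lambda>u. [])],[(\<lambda>u. []),(\<lambda>u. []),(\<lambda>u. [])],[(\<lambda>u. []),(\<lambda>u. []),(\<lambda>u. [])],[(\<lambda>u. []),(\<lambda>u. []),(\<lambda>u. [])]],[[(\<lambda>u. []),(\<lambda>u. []),(\<lambda>u. [])],[(\<lambda>u. []),(\<lambda>u. []),(\<lambda>u. [])],[(\<lambda>u. []),(\<lambda>u. []),(\<lambda>u. [])],[(\<lambda>u. []),(\<lambda>u. []),(\<lambda>u. [])]]],[[[(\<lambda>u. []),(\<lambda>u. []),(\<lambda>u. [])],[(\<lambda>u. []),(\<lambda>u. []),(\<lambda>u. [])],[(\<lambda>u. []),(\<lambda>u. []),(\<lambda>u. [])],[(\<lambda>u.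 []),(\<lambda>u. []),(\<lambda>u. [])]],[[(\<lambda>u. []),(\<lambda>u. []),(\<lambda>u. [])],[T_2_2_1_1_0,(\<lambda>u. []),T_2_2_1_1_2],[(\<lambda>u. []),(\<lambda>u. []),(\<lambda>u. [])],[(\<lambda>u. []),(\<lambda>u. []),(\<lambda>u. [])]],[[(\<lambda>u. []),T_2_2_2_0_1,(\<lambda>u. [])],[(\<lambda>u. []),T_2_2_2_1_1,T_2_2_2_1_2],[(\<lambda>u. []),(\<lambda>u. []),T_2_2_2_2_2],[(\<lambda>u. []),(\<lambda>u. []),(\<lambda>u. [])]],[[(\<lambda>u. []),(\<lambda>u. []),(\<lambda>u. [])],[(\<lambda>u. []),(\<lambda>u. []),(\<lambda>u. [])],[(\<lambda>u. []),(\<lambda>u. []),(\<lambda>u. [])],[(\<lambda>u. []),(\<lambda>u. []),(\<lambda>u. [])]]],[[[(\<lambda>u. []),(\<lambda>u. []),(\<lambda>u. [])],[(\<lambda>u. []),(\<lambda>u. []),(\<lambda>u. [])],[(\<lambda>u. []),(\<lambda>u. []),(\<lambda>u. [])],[(\<lambda>u. []),(\<lambda>u. []),(\<lambda>u. [])]],[[(\<lambda>u. []),(\<lambda>u. []),(\<lambda>u. [])],[(\<lambda>u. []),(\<lambda>u. []),(\<lambda>u. [])],[(\<lambda>u. []),(\<lambda>u. []),(\<lambda>u. [])],[(\<lambda>u. []),(\<lambda>u. []),(\<lambda>u. [])]],[[(\<lambda>u. []),(\<lambda>u. []),(\<lambda>u. [])],[(\<lambda>u. []),T_2_3_2_1_1,T_2_3_2_1_2],[(\<lambda>u.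 []),(\<lambda>u. []),T_2_3_2_2_2],[(\<lambda>u. []),(\<lambda>u. []),(\<lambda>u. [])]],[[(\<lambda>u. []),(\<lambda>u. []),(\<lambda>u. [])],[(\<lambda>u. []),(\<lambda>u. []),(\<lambda>u. [])],[(\<lambda>u. []),(\<lambda>u. []),(\<lambda>u. [])],[(\<lambda>u. []),(\<lambda>u. []),(\<lambda>u. [])]]],[[[(\<lambda>u. []),(\<lambda>u. []),(\<lambda>u. [])],[(\<lambda>u. []),(\<lambda>u. []),(\<lambda>u. [])],[(\<lambda>u. []),(\<lambda>u. []),(\<lambda>u. [])],[(\<lambda>u. []),(\<lambda>u. []),(\<lambda>u. [])]],[[(\<lambda>u. []),(\<lambda>u. []),(\<lambda>u. [])],[(\<lambda>u. []),(\<lambda>u. []),(\<lambda>u. [])],[(\<lambda>u. []),(\<lambda>u. []),(\<lambda>u. [])],[(\<lambda>u. []),(\<lambda>u. []),(\<lambda>u. [])]],[[(\<lambda>u. []),(\<lambda>u. []),(\<lambda>u. [])],[(\<lambda>u. []),(\<lambda>u. []),(\<lambda>u. [])],[(\<lambda>u. []),(\<lambda>u. []),T_2_4_2_2_2],[(\<lambda>u. []),(\<lambda>u. []),(\<lambda>u. [])]],[[(\<lambda>u. []),(\<lambda>u. []),(\<lambda>u. [])],[(\<lambda>u. []),(\<lambda>u. []),(\<lambda>u. [])],[(\<lambda>u. []),(\<lambda>u. []),(\<lambda>u. [])],[(\<lambda>u. []),(\<lambda>u. []),(\<lambda>u. [])]]],[[[(\<lambda>u. []),(\<lambda>u. []),(\<lambda>u.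 [])],[(\<lambda>u. []),(\<lambda>u. []),(\<lambda>u. [])],[(\<lambda>u. []),(\<lambda>u. []),(\<lambda>u. [])],[(\<lambda>u. []),(\<lambda>u. []),(\<lambda>u. [])]],[[(\<lambda>u. []),(\<lambda>u. []),(\<lambda>u. [])],[(\<lambda>u. []),(\<lambda>u. []),(\<lambda>u. [])],[(\<lambda>u. []),(\<lambda>u. []),(\<lambda>u. [])],[(\<lambda>u. []),(\<lambda>u. []),(\<lambda>u. [])]],[[(\<lambda>u. []),(\<lambda>u. []),(\<lambda>u. [])],[(\<lambda>u. []),(\<lambda>u. []),(\<lambda>u. [])],[(\<lambda>u. []),(\<lambda>u. []),(\<lambda>u. [])],[(\<lambda>u. []),(\<lambda>u. []),(\<lambda>u. [])]],[[(\<lambda>u. []),(\<lambda>u. []),(\<lambda>u. [])],[(\<lambda>u. []),(\<lambda>u. []),(\<lambda>u. [])],[(\<lambda>u. []),(\<lambda>u. []),(\<lambda>u. [])],[(\<lambda>u. []),(\<lambda>u. []),(\<lambda>u. [])]]],[[[(\<lambda>u. []),(\<lambda>u. []),(\<lambda>u. [])],[(\<lambda>u. []),(\<lambda>u. []),(\<lambda>u. [])],[(\<lambda>u. []),(\<lambda>u. []),(\<lambda>u. [])],[(\<lambda>u. []),(\<lambda>u. []),(\<lambda>u. [])]],[[(\<lambda>u. []),(\<lambda>u. []),(\<lambda>u. [])],[(\<lambda>u. []),(\<lambda>u. []),(\<lambda>u. [])],[(\<lambda>u. []),(\<lambda>u. []),(\<lambda>u. [])],[(\<lambda>u. []),(\<lambda>u.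 []),(\<lambda>u. [])]],[[(\<lambda>u. []),(\<lambda>u. []),(\<lambda>u. [])],[(\<lambda>u. []),(\<lambda>u. []),(\<lambda>u. [])],[(\<lambda>u. []),(\<lambda>u. []),(\<lambda>u. [])],[(\<lambda>u. []),(\<lambda>u. []),(\<lambda>u. [])]],[[(\<lambda>u. []),(\<lambda>u. []),(\<lambda>u. [])],[(\<lambda>u. []),(\<lambda>u. []),(\<lambda>u. [])],[(\<lambda>u. []),(\<lambda>u. []),(\<lambda>u. [])],[(\<lambda>u. []),(\<lambda>u. []),(\<lambda>u. [])]]]]]"


definition Ltab :: "nat \<Rightarrow> nat \<Rightarrow> nat \<Rightarrow> nat \<Rightarrow> int list list" where
  "Ltab i b c r = (if i \<le> 6 \<and> b \<le> 3 \<and> c \<le> 3 \<and> r \<le> 2 then (tabl ! i ! b ! c ! r) () else [])"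

definition TL :: "nat \<Rightarrow> nat \<Rightarrow> nat \<Rightarrow> nat \<Rightarrow> nat \<Rightarrow> int list" where
  "TL a i b c r = (if 1 \<le> a \<and> a \<le> 2 \<and> i \<le> 6 \<and> b \<le> 3 \<and> c \<le> 3 \<and> r \<le> 2 then (ttabl ! (a - 1) ! i ! b ! c ! r) () else [])"

definition QL :: "nat \<Rightarrow> nat \<Rightarrow> nat \<Rightarrow> nat \<Rightarrow> nat \<Rightarrow> int list list" where
  "QL j b c r r' = (if r = 0 then Ltab j b c r' else scLL 0 (Ltab j (dd 1 b r) (dd 2 c r) r'))"

definition termL :: "nat \<Rightarrow> nat \<Rightarrow> nat \<Rightarrow> nat \<Rightarrow> nat \<Rightarrow> int list list" where
  "termL i b c r r' = (if r' < r then (if i = 0 then [] else map (shL (b+c+3)) ([] # QL (i - 1) b c r r'))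
      else QL i b c r r')"

definition RRL :: "nat \<Rightarrow> nat \<Rightarrow> nat \<Rightarrow> nat \<Rightarrow> int list list" where
  "RRL i b c r = (if \<not> c \<le> b \<or> cnt 4 b c r = 0 then []
     else addLL (termL i b c r 0) (addLL (termL i b c r 1) (termL i b c r 2)))"

definition chk :: "nat \<Rightarrow> nat \<Rightarrow> nat \<Rightarrow> nat \<Rightarrow> bool" where
  "chk i b c r = (normLL (scLL 0 (Ltab i b c r)) = normLL (RRL i b c r))"

definition Dl :: "int list" where
  "Dl = [1, -2, -1, 2, 2, 2, -5, -2, 0, 2, 5, -2, -2, -2, 1, 2, -1]"

definition Dp :: "int poly" where "Dp = Poly Dl"

definition VLs :: "nat \<Rightarrow> nat \<Rightarrow> nat \<Rightarrow> nat \<Rightarrow> nat \<Rightarrow> int list" where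
  "VLs a i b c r = (if a \<le> 2 then TL a i b c r else foldr addL (Ltab i b c r) [])"

definition tS :: "nat \<Rightarrow> nat \<Rightarrow> nat \<Rightarrow> nat \<Rightarrow> nat \<Rightarrow> nat \<Rightarrow> int list" where
  "tS a i b c r r' = (if r' < r then (if i = 0 then [] else shL (a+b+c-1) (VLs (dd 0 a r) (i-1) (dd 1 b r) (dd 2 c r) r'))
      else VLs (dd 0 a r) i (dd 1 b r) (dd 2 c r) r')"

definition RRLs :: "nat \<Rightarrow> nat \<Rightarrow> nat \<Rightarrow> nat \<Rightarrow> nat \<Rightarrow> int list" where
  "RRLs a i b c r = (if \<not> (b \<le> a \<and> c \<le> b) \<or> cnt a b c r = 0 then []
     else if a + b + c = 1 then (if i = 0 then Dl else [])
     else addL (tS a i b c r 0) (addL (tS a i b c r 1) (tS a i b c r 2)))"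

definition chks :: "nat \<Rightarrow> nat \<Rightarrow> nat \<Rightarrow> nat \<Rightarrow> nat \<Rightarrow> bool" where
  "chks a i b c r = (strip_while ((=) 0) (VLs a i b c r) = strip_while ((=) 0) (RRLs a i b c r))"

lemma chk_small: "list_all (\<lambda>(a,i,b,c,r). chks a i b c r)
   [(a,i,b,c,r). a <- [1,2,3], i <- [0..<8], b <- [0..<4], c <- [0..<4], r <- [0..<3]]"
  by code_simp

lemma chk_big: "list_all (\<lambda>(i,b,c,r). chk i b c r)
   [(i,b,c,r). i <- [0..<8], b <- [0..<4], c <- [0..<4], r <- [0..<3]]"
  by code_simp

definition V :: "nat \<Rightarrow> nat \<Rightarrow> nat \<Rightarrow> nat \<Rightarrow> nat \<Rightarrow> int poly" where
  "V a i b c r = (if a \<le> 2 then Poly (TL a i b c r) else poly (pll (Ltab i b c r)) (qvar ^ (a - 3)))"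

definition RR :: "int poly \<Rightarrow> (nat \<Rightarrow> nat \<Rightarrow> nat \<Rightarrow> nat \<Rightarrow> nat \<Rightarrow> int poly) \<Rightarrow> nat \<Rightarrow> nat \<Rightarrow> nat \<Rightarrow> nat \<Rightarrow> nat \<Rightarrow> int poly" where
  "RR e F a i b c r = (if \<not> (b \<le> a \<and> c \<le> b) \<or> cnt a b c r = 0 then 0
     else if a + b + c = 1 then (if i = 0 then e else 0)
     else (\<Sum>r'<3. if r' < r then (if i = 0 then 0 else qvar ^ (a + b + c - 1) * F (dd 0 a r) (i - 1) (dd 1 b r) (dd 2 c r) r')
                   else F (dd 0 a r) i (dd 1 b r) (dd 2 c r) r'))"

lemma sum3: "(\<Sum>r'<(3::nat). f r') = f 0 + f 1 + (f 2 :: 'a :: comm_monoid_add)"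
  by (simp add: eval_nat_numeral add.assoc)

lemma V_ge3: "a \<ge> 3 \<Longrightarrow> V a i b c r = poly (pll (Ltab i b c r)) (qvar ^ (a - 3))"
  by (simp add: V_def)

lemma V_QL:
  assumes "a \<ge> 4"
  shows "V (dd 0 a r) j (dd 1 b r) (dd 2 c r) r' = poly (pll (QL j b c r r')) (qvar ^ (a - 4))"
proof (cases "r = 0")
  case True
  then show ?thesis using assms by (simp add: V_ge3 QL_def dd_def numeral_eq_Suc)
next
  case False
  have e: "a - 3 = Suc (a - 4)" using assms by simp
  show ?thesis using False assms
    by (simp add: V_ge3 QL_def dd_def poly_scLL e)
qed

lemma term_big:
  assumes "a \<ge> 4"
  shows "(if r' < r then (if i = 0 then 0 else qvar^(a+b+c-1) * V (dd 0 a r) (i-1) (dd 1 b r) (dd 2 c r) r')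
          else V (dd 0 a r) i (dd 1 b r) (dd 2 c r) r') = poly (pll (termL i b c r r')) (qvar^(a-4))"
proof -
  have e0: "a+b+c-1 = (b+c+3) + (a-4)" using assms by simp
  have e: "qvar ^ (a+b+c-1) = qvar^(b+c+3) * (qvar ^ (a-4) :: int poly)"
    unfolding e0 by (simp add: power_add)
  note v1 = V_QL[OF assms, of r "i-1" b c r']
  note v2 = V_QL[OF assms, of r i b c r']
  show ?thesis
  proof (cases "r' < r")
    case True
    show ?thesis
    proof (cases "i = 0")
      case True
      then show ?thesis using \<open>r' < r\<close> by (simp add: termL_def pll_def)
    next
      case False
      then show ?thesis using \<open>r' < r\<close>
        unfolding termL_def if_P[OF \<open>r' < r\<close>] if_not_P[OF False] pll_map_shL pll_Nil_Cons v1 e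
        by (simp add: algebra_simps)
    qed
  next
    case False
    then show ?thesis unfolding termL_def if_not_P[OF False] v2 by simp
  qed
qed

lemma RR_big:
  assumes "a \<ge> 4" "b \<le> 3"
  shows "RR Dp V a i b c r = poly (pll (RRL i b c r)) (qvar ^ (a - 4))"
proof -
  have c1: "(\<not> (b \<le> a \<and> c \<le> b) \<or> cnt a b c r = 0) = (\<not> c \<le> b \<or> cnt 4 b c r = 0)"
    using assms by (auto simp: cnt_def)
  have c2: "(a + b + c = 1) = False" using assms by simp
  show ?thesis
  proof (cases "\<not> c \<le> b \<or> cnt 4 b c r = 0")
    case True
    then show ?thesis unfolding RR_def RRL_def c1 by (simp add: pll_def)
  next
    case False
    have t: "\<And>r'. (if r' < r then (if i = 0 then 0 else qvar^(a+b+c-1) * V (dd 0 a r) (i-1) (dd 1 b r) (dd 2 c r) r')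
          else V (dd 0 a r) i (dd 1 b r) (dd 2 c r) r') = poly (pll (termL i b c r r')) (qvar^(a-4))"
      by (rule term_big[OF assms(1)])
    show ?thesis unfolding RR_def RRL_def c1 c2 if_not_P[OF False] if_False
      apply (simp only: sum3 t)
      apply (simp only: pll_addLL poly_add add.assoc)
      done
  qed
qed

lemma V_big: "a \<ge> 4 \<Longrightarrow> V a i b c r = poly (pll (scLL 0 (Ltab i b c r))) (qvar ^ (a - 4))"
proof -
  assume a: "a \<ge> 4"
  have e: "a - 3 = Suc (a - 4)" using a by simp
  show ?thesis using a by (simp add: V_ge3 poly_scLL e)
qed

lemma in_big: "(i::nat) \<le> 7 \<Longrightarrow> b \<le> 3 \<Longrightarrow> c \<le> 3 \<Longrightarrow> r \<le> 2 \<Longrightarrow>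
   (i,b,c,r) \<in> set [(i,b,c,r). i <- [0..<8], b <- [0..<4], c <- [0..<4], r <- [0..<3]]"
  by (simp add: image_iff)

lemma check_big:
  assumes "a \<ge> 4" "i \<le> 7" "b \<le> 3" "c \<le> 3" "r \<le> 2"
  shows "V a i b c r = RR Dp V a i b c r"
proof -
  have "chk i b c r"
    using chk_big in_big[OF assms(2-5)] unfolding list_all_iff by fastforce
  then have "pll (scLL 0 (Ltab i b c r)) = pll (RRL i b c r)"
    unfolding chk_def by (rule normLL_eq)
  then show ?thesis using assms by (simp add: V_big RR_big)
qed

lemma poly_pll_1: "poly (pll xs) 1 = Poly (foldr addL xs [])"
  by (induction xs) (auto simp: pll_Cons Poly_addL, simp add: pll_def)

lemma V_small: "a \<le> 3 \<Longrightarrow> V a i b c r = Poly (VLs a i b c r)"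
  by (cases "a = 3") (auto simp: V_def VLs_def poly_pll_1)

lemma Poly_tS:
  assumes "1 \<le> a" "a \<le> 3"
  shows "Poly (tS a i b c r r') = (if r' < r then (if i = 0 then 0 else qvar ^ (a + b + c - 1) * V (dd 0 a r) (i - 1) (dd 1 b r) (dd 2 c r) r')
                   else V (dd 0 a r) i (dd 1 b r) (dd 2 c r) r')"
proof -
  have d: "dd 0 a r \<le> 3" using assms by (auto simp: dd_def)
  show ?thesis unfolding tS_def V_small[OF d] by (simp add: Poly_shL)
qed

lemma RR_small:
  assumes "1 \<le> a" "a \<le> 3"
  shows "RR Dp V a i b c r = Poly (RRLs a i b c r)"
proof (cases "\<not> (b \<le> a \<and> c \<le> b) \<or> cnt a b c r = 0")
  case True
  then show ?thesis unfolding RR_def RRLs_def by simp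
next
  case False
  show ?thesis
  proof (cases "a + b + c = 1")
    case True
    then show ?thesis using False unfolding RR_def RRLs_def by (simp add: Dp_def)
  next
    case F2: False
    show ?thesis unfolding RR_def RRLs_def if_not_P[OF False] if_not_P[OF F2]
      by (simp only: sum3 Poly_addL Poly_tS[OF assms] add.assoc)
  qed
qed

lemma in_small: "1 \<le> (a::nat) \<Longrightarrow> a \<le> 3 \<Longrightarrow> i \<le> 7 \<Longrightarrow> b \<le> 3 \<Longrightarrow> c \<le> 3 \<Longrightarrow> r \<le> 2 \<Longrightarrow>
   (a,i,b,c,r) \<in> set [(a,i,b,c,r). a <- [1,2,3], i <- [0..<8], b <- [0..<4], c <- [0..<4], r <- [0..<3]]"
  by (simp add: image_iff) linarith

lemma check_small:
  assumes "1 \<le> a" "a \<le> 3" "i \<le> 7" "b \<le> 3" "c \<le> 3" "r \<le> 2"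
  shows "V a i b c r = RR Dp V a i b c r"
proof -
  have "chks a i b c r"
    using chk_small in_small[OF assms] unfolding list_all_iff by fastforce
  then have "Poly (VLs a i b c r) = Poly (RRLs a i b c r)"
    unfolding chks_def by (rule Poly_strip_eq)
  then show ?thesis using assms by (simp add: V_small RR_small)
qed

lemma V_hi: "i \<ge> 7 \<Longrightarrow> V a i b c r = 0"
  by (simp add: V_def TL_def Ltab_def pll_def)

lemma check_hi:
  assumes "i \<ge> 8"
  shows "V a i b c r = RR Dp V a i b c r"
proof -
  have h1: "\<And>a' b' c' r'. V a' (i-1) b' c' r' = 0" using assms by (intro V_hi) simp
  have h2: "\<And>a' b' c' r'. V a' i b' c' r' = 0" using assms by (intro V_hi) simp
  have h3: "\<And>a' b' c' r'. V a' (i - Suc 0) b' c' r' = 0" using assms by (intro V_hi) simp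
  show ?thesis using assms by (simp add: h1 h2 h3 RR_def cong: if_cong)
qed

lemma check_all:
  assumes "1 \<le> a" "b \<le> 3" "c \<le> 3" "r \<le> 2"
  shows "V a i b c r = RR Dp V a i b c r"
proof -
  consider "i \<ge> 8" | "i \<le> 7 \<and> a \<le> 3" | "i \<le> 7 \<and> a \<ge> 4" by linarith
  then show ?thesis
    by cases (use assms check_hi check_small check_big in auto)
qed

lemma RR_cong:
  assumes "\<And>j r'. r' < 3 \<Longrightarrow> b \<le> a \<Longrightarrow> c \<le> b \<Longrightarrow> cnt a b c r \<noteq> 0 \<Longrightarrow> a + b + c \<noteq> 1 \<Longrightarrow>
      F (dd 0 a r) j (dd 1 b r) (dd 2 c r) r' = G (dd 0 a r) j (dd 1 b r) (dd 2 c r) r'"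
  shows "RR e F a i b c r = RR e G a i b c r"
  unfolding RR_def using assms by (auto intro!: sum.cong)



definition latg :: "nat \<Rightarrow> nat list \<Rightarrow> bool" where
  "latg L w \<longleftrightarrow> (\<forall>k \<le> length w. \<forall>i. Suc i < L \<longrightarrow> count_list (take k w) (Suc i) \<le> count_list (take k w) i)"

definition Wg :: "nat list \<Rightarrow> nat list set" where
  "Wg lam = {w. (\<forall>x\<in>set w. x < length lam) \<and> (\<forall>i<length lam. count_list w i = lam ! i) \<and> latg (length lam) w}"

definition wdesc :: "nat list \<Rightarrow> nat set" where
  "wdesc w = {m. 1 \<le> m \<and> m < length w \<and> w ! (m - 1) < w ! m}"

definition rw :: "nat list \<Rightarrow> (nat \<times> nat \<Rightarrow> nat) \<Rightarrow> nat list" where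
  "rw lam T = map (row_of lam T) [1..<Suc (sum_list lam)]"

definition decr :: "nat list \<Rightarrow> bool" where
  "decr lam \<longleftrightarrow> (\<forall>i. Suc i < length lam \<longrightarrow> lam ! Suc i \<le> lam ! i)"

lemma count_map_upt: "count_list (map f [a..<b]) x = card {m \<in> {a..<b}. f m = x}"
proof -
  have "count_list (map f [a..<b]) x = length (filter (\<lambda>m. x = f m) [a..<b])"
    by (simp add: count_list_eq_length_filter filter_map comp_def)
  also have "\<dots> = card (set (filter (\<lambda>m. x = f m) [a..<b]))"
    by (rule distinct_card[symmetric]) simp
  also have "set (filter (\<lambda>m. x = f m) [a..<b]) = {m \<in> {a..<b}. f m = x}" by auto
  finally show ?thesis .
qed

lemma length_Wg: "w \<in> Wg lam \<Longrightarrow> length w = sum_list lam"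
proof -
  assume w: "w \<in> Wg lam"
  have "length w = sum (count_list w) {..<length lam}"
    using w by (intro sum_count_set[symmetric]) (auto simp: Wg_def)
  also have "\<dots> = (\<Sum>i<length lam. lam ! i)"
    using w by (intro sum.cong) (auto simp: Wg_def)
  also have "\<dots> = sum_list lam" by (simp add: sum_list_sum_nth atLeast0LessThan)
  finally show ?thesis .
qed

lemma finite_Wg: "finite (Wg lam)"
proof (rule finite_subset)
  show "Wg lam \<subseteq> {w. set w \<subseteq> {..<length lam} \<and> length w = sum_list lam}"
  proof
    fix w assume w: "w \<in> Wg lam"
    have "set w \<subseteq> {..<length lam}" using w unfolding Wg_def by blast
    moreover have "length w = sum_list lam" using w by (rule length_Wg)
    ultimately show "w \<in> {w. set w \<subseteq> {..<length lam} \<and> length w = sum_list lam}" by blast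
  qed
  show "finite {w. set w \<subseteq> {..<length lam} \<and> length w = sum_list lam}"
    by (rule finite_lists_length_eq) (rule finite_lessThan)
qed

section \<open>From tableaux to words\<close>

context
  fixes lam :: "nat list" and T :: "nat \<times> nat \<Rightarrow> nat"
  assumes syt: "syt lam T"
begin

abbreviation "NN \<equiv> sum_list lam"
abbreviation "CC \<equiv> cells lam"

lemma bij: "bij_betw T CC {1..NN}"
  using syt by (simp add: syt_def)

lemma inj: "inj_on T CC"
  using bij by (simp add: bij_betw_def)

lemma img: "T ` CC = {1..NN}"
  using bij by (simp add: bij_betw_def)

lemma T_range: "c \<in> CC \<Longrightarrow> T c \<in> {1..NN}"
  using img by blast

lemma cell_in: "m \<in> {1..NN} \<Longrightarrow> inv_into CC T m \<in> CC"
  using img by (metis inv_into_into)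

lemma T_cell: "m \<in> {1..NN} \<Longrightarrow> T (inv_into CC T m) = m"
  using img by (metis f_inv_into_f)

lemma cell_T: "c \<in> CC \<Longrightarrow> inv_into CC T (T c) = c"
  using inj by (simp add: inv_into_f_f)

lemma row_T: "(i, j) \<in> CC \<Longrightarrow> row_of lam T (T (i, j)) = i"
  by (simp add: row_of_def cell_T)

lemma row_lt: "m \<in> {1..NN} \<Longrightarrow> row_of lam T m < length lam"
  using cell_in[of m] by (auto simp: row_of_def cells_def split: prod.splits)

lemma row_strict: "(i, j) \<in> CC \<Longrightarrow> j' < j \<Longrightarrow> T (i, j') < T (i, j)"
proof (induction j arbitrary: j')
  case 0 then show ?case by simp
next
  case (Suc k)
  have k: "(i, k) \<in> CC" using Suc.prems by (auto simp: cells_def)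
  have s: "T (i, k) < T (i, Suc k)" using syt Suc.prems k by (auto simp: syt_def)
  show ?case
  proof (cases "j' = k")
    case True then show ?thesis using s by simp
  next
    case False then show ?thesis using Suc.IH[OF k, of j'] Suc.prems s by simp
  qed
qed

lemma row_set: "i < length lam \<Longrightarrow> {m \<in> {1..NN}. row_of lam T m = i} = T ` ({i} \<times> {..<lam ! i})"
proof
  assume i: "i < length lam"
  show "{m \<in> {1..NN}. row_of lam T m = i} \<subseteq> T ` ({i} \<times> {..<lam ! i})"
  proof
    fix m assume m: "m \<in> {m \<in> {1..NN}. row_of lam T m = i}"
    obtain i' j' where c: "inv_into CC T m = (i', j')" by fastforce
    have "(i', j') \<in> CC" using cell_in[of m] m c by simp
    moreover have "i' = i" using m c by (simp add: row_of_def)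
    ultimately show "m \<in> T ` ({i} \<times> {..<lam ! i})"
      using T_cell[of m] m c by (auto simp: cells_def intro!: image_eqI[of _ _ "(i', j')"])
  qed
next
  assume i: "i < length lam"
  show "T ` ({i} \<times> {..<lam ! i}) \<subseteq> {m \<in> {1..NN}. row_of lam T m = i}"
  proof
    fix m assume "m \<in> T ` ({i} \<times> {..<lam ! i})"
    then obtain j where j: "j < lam ! i" "m = T (i, j)" by auto
    have "(i, j) \<in> CC" using i j by (simp add: cells_def)
    then show "m \<in> {m \<in> {1..NN}. row_of lam T m = i}"
      using j T_range row_T by auto
  qed
qed

lemma row_card: "i < length lam \<Longrightarrow> card {m \<in> {1..NN}. row_of lam T m = i} = lam ! i"
proof -
  assume i: "i < length lam"
  have sub: "{i} \<times> {..<lam ! i} \<subseteq> CC" using i by (auto simp: cells_def)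
  have "card (T ` ({i} \<times> {..<lam ! i})) = card ({i} \<times> {..<lam ! i})"
    by (rule card_image) (rule inj_on_subset[OF inj sub])
  then show ?thesis using row_set[OF i] by (simp add: card_cartesian_product)
qed

lemma row_lat:
  assumes d: "decr lam" and k: "k \<le> NN" and i: "Suc i < length lam"
  shows "card {m \<in> {1..k}. row_of lam T m = Suc i} \<le> card {m \<in> {1..k}. row_of lam T m = i}"
proof -
  define g where "g m = T (i, snd (inv_into CC T m))" for m
  show ?thesis
  proof (rule card_inj_on_le)
    show "finite {m \<in> {1..k}. row_of lam T m = i}" by simp
    show "g ` {m \<in> {1..k}. row_of lam T m = Suc i} \<subseteq> {m \<in> {1..k}. row_of lam T m = i}"
    proof
      fix x assume "x \<in> g ` {m \<in> {1..k}. row_of lam T m = Suc i}"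
      then obtain m where m: "m \<in> {1..k}" "row_of lam T m = Suc i" and x: "x = g m" by auto
      have mN: "m \<in> {1..NN}" using m k by auto
      obtain j where c: "inv_into CC T m = (Suc i, j)"
        using m(2) by (metis prod.collapse row_of_def)
      have cC: "(Suc i, j) \<in> CC" using cell_in[OF mN] c by simp
      then have "j < lam ! Suc i" by (simp add: cells_def)
      then have "j < lam ! i" using d i by (auto simp: decr_def)
      then have cC': "(i, j) \<in> CC" using i by (simp add: cells_def)
      have lt: "T (i, j) < T (Suc i, j)" using syt cC cC' by (auto simp: syt_def)
      have "T (Suc i, j) = m" using T_cell[OF mN] c by simp
      then have "x = T (i, j)" "T (i, j) < m" using x c lt by (auto simp: g_def)
      then show "x \<in> {m \<in> {1..k}. row_of lam T m = i}"
        using T_range[OF cC'] row_T[OF cC'] m by auto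
    qed
    show "inj_on g {m \<in> {1..k}. row_of lam T m = Suc i}"
    proof
      fix m1 m2 assume m1: "m1 \<in> {m \<in> {1..k}. row_of lam T m = Suc i}"
        and m2: "m2 \<in> {m \<in> {1..k}. row_of lam T m = Suc i}" and e: "g m1 = g m2"
      have mN1: "m1 \<in> {1..NN}" and mN2: "m2 \<in> {1..NN}" using m1 m2 k by auto
      obtain j1 where c1: "inv_into CC T m1 = (Suc i, j1)"
        using m1 by (metis (mono_tags, lifting) mem_Collect_eq prod.collapse row_of_def)
      obtain j2 where c2: "inv_into CC T m2 = (Suc i, j2)"
        using m2 by (metis (mono_tags, lifting) mem_Collect_eq prod.collapse row_of_def)
      have "j1 < lam ! i" "j2 < lam ! i"
        using cell_in[OF mN1] cell_in[OF mN2] c1 c2 d i by (auto simp: cells_def decr_def)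
      then have "(i, j1) \<in> CC" "(i, j2) \<in> CC" using i by (auto simp: cells_def)
      moreover have "T (i, j1) = T (i, j2)" using e c1 c2 by (simp add: g_def)
      ultimately have "j1 = j2" using inj by (auto dest: inj_onD)
      then show "m1 = m2" using T_cell[OF mN1] T_cell[OF mN2] c1 c2 by simp
    qed
  qed
qed

lemma rw_len: "length (rw lam T) = NN"
  by (simp add: rw_def del: upt_Suc)

lemma rw_nth: "k < NN \<Longrightarrow> rw lam T ! k = row_of lam T (Suc k)"
  by (simp add: rw_def del: upt_Suc)

lemma take_rw: "k \<le> NN \<Longrightarrow> take k (rw lam T) = map (row_of lam T) [1..<Suc k]"
  by (simp add: rw_def take_map del: upt_Suc)

lemma rw_Wg: "decr lam \<Longrightarrow> rw lam T \<in> Wg lam"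
proof -
  assume d: "decr lam"
  have "\<forall>x\<in>set (rw lam T). x < length lam"
    using row_lt by (auto simp: rw_def)
  moreover have "\<forall>i<length lam. count_list (rw lam T) i = lam ! i"
  proof (intro allI impI)
    fix i assume i: "i < length lam"
    have "{1..<Suc NN} = {1..NN}" by auto
    then show "count_list (rw lam T) i = lam ! i"
      using row_card[OF i] by (simp add: rw_def count_map_upt del: upt_Suc)
  qed
  moreover have "latg (length lam) (rw lam T)"
    unfolding latg_def
  proof (intro allI impI)
    fix k i assume k: "k \<le> length (rw lam T)" and i: "Suc i < length lam"
    have kN: "k \<le> NN" using k by (simp add: rw_len)
    have "{1..<Suc k} = {1..k}" by auto
    then show "count_list (take k (rw lam T)) (Suc i) \<le> count_list (take k (rw lam T)) i"
      using row_lat[OF d kN i] by (simp add: take_rw[OF kN] count_map_upt del: upt_Suc)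
  qed
  ultimately show ?thesis by (simp add: Wg_def)
qed

lemma desc_rw: "descents lam T = wdesc (rw lam T)"
  by (auto simp: descents_def wdesc_def rw_len rw_nth)

lemma rank: "(i, j) \<in> CC \<Longrightarrow> card {m \<in> {1..NN}. row_of lam T m = i \<and> m < T (i, j)} = j"
proof -
  assume ij: "(i, j) \<in> CC"
  have i: "i < length lam" and jl: "j < lam ! i" using ij by (auto simp: cells_def)
  have "{m \<in> {1..NN}. row_of lam T m = i \<and> m < T (i, j)} = T ` ({i} \<times> {..<j})"
  proof
    show "T ` ({i} \<times> {..<j}) \<subseteq> {m \<in> {1..NN}. row_of lam T m = i \<and> m < T (i, j)}"
    proof
      fix m assume "m \<in> T ` ({i} \<times> {..<j})"
      then obtain j' where j': "j' < j" "m = T (i, j')" by auto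
      have "(i, j') \<in> CC" using ij j' by (auto simp: cells_def)
      then show "m \<in> {m \<in> {1..NN}. row_of lam T m = i \<and> m < T (i, j)}"
        using j' T_range row_T row_strict[OF ij j'(1)] by auto
    qed
    show "{m \<in> {1..NN}. row_of lam T m = i \<and> m < T (i, j)} \<subseteq> T ` ({i} \<times> {..<j})"
    proof
      fix m assume m: "m \<in> {m \<in> {1..NN}. row_of lam T m = i \<and> m < T (i, j)}"
      then have mN: "m \<in> {1..NN}" by simp
      obtain j' where c: "inv_into CC T m = (i, j')"
        using m by (metis (mono_tags, lifting) mem_Collect_eq prod.collapse row_of_def)
      have cC: "(i, j') \<in> CC" using cell_in[OF mN] c by simp
      have Tm: "T (i, j') = m" using T_cell[OF mN] c by simp
      have "j' < j"
      proof (rule ccontr)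
        assume "\<not> j' < j"
        then have "j = j' \<or> j < j'" by auto
        then have "T (i, j) \<le> T (i, j')" using row_strict[OF cC] by (metis order.strict_implies_order order_refl)
        then show False using m Tm by simp
      qed
      then show "m \<in> T ` ({i} \<times> {..<j})" using Tm by force
    qed
  qed
  moreover have "card (T ` ({i} \<times> {..<j})) = j"
  proof -
    have "{i} \<times> {..<j} \<subseteq> CC" using ij by (auto simp: cells_def)
    then have "card (T ` ({i} \<times> {..<j})) = card ({i} \<times> {..<j})"
      by (intro card_image inj_on_subset[OF inj])
    then show ?thesis by (simp add: card_cartesian_product)
  qed
  ultimately show ?thesis by simp
qed

end

lemma rank_unique:
  fixes R :: "nat set"
  assumes "finite R" "x \<in> R" "y \<in> R" "card {m \<in> R. m < x} = card {m \<in> R. m < y}"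
  shows "x = y"
proof (rule ccontr)
  assume ne: "x \<noteq> y"
  have lt: "card {m \<in> R. m < u} < card {m \<in> R. m < v}" if "u \<in> R" "v \<in> R" "u < v" for u v
  proof (rule psubset_card_mono)
    show "finite {m \<in> R. m < v}" using assms(1) by simp
    show "{m \<in> R. m < u} \<subset> {m \<in> R. m < v}" using that by auto
  qed
  show False
  proof (cases "x < y")
    case True then show False using lt[OF assms(2,3)] assms(4) by simp
  next
    case False then have "y < x" using ne by simp
    then show False using lt[OF assms(3,2)] assms(4) by simp
  qed
qed

lemma rw_inj:
  assumes s1: "syt lam T1" and s2: "syt lam T2" and e: "rw lam T1 = rw lam T2"
  shows "T1 = T2"
proof
  fix c
  have rows: "row_of lam T1 m = row_of lam T2 m" if "m \<in> {1..sum_list lam}" for m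
  proof -
    have "rw lam T1 ! (m - 1) = rw lam T2 ! (m - 1)" using e by simp
    then show ?thesis using that rw_nth[OF s1, of "m - 1"] rw_nth[OF s2, of "m - 1"] by auto
  qed
  show "T1 c = T2 c"
  proof (cases "c \<in> cells lam")
    case False
    have z1: "\<forall>c. c \<notin> cells lam \<longrightarrow> T1 c = 0" using s1 unfolding syt_def by (elim conjE)
    have z2: "\<forall>c. c \<notin> cells lam \<longrightarrow> T2 c = 0" using s2 unfolding syt_def by (elim conjE)
    show ?thesis using z1 z2 False by (metis surj_pair)
  next
    case True
    obtain i j where c: "c = (i, j)" by fastforce
    define R where "R = {m \<in> {1..sum_list lam}. row_of lam T1 m = i}"
    have R2: "R = {m \<in> {1..sum_list lam}. row_of lam T2 m = i}"
      unfolding R_def using rows by auto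
    have x: "T1 c \<in> R" using T_range[OF s1 True] row_T[OF s1] True c by (simp add: R_def)
    have y: "T2 c \<in> R" using T_range[OF s2 True] row_T[OF s2] True c by (simp add: R2)
    have "card {m \<in> R. m < T1 c} = j"
      using rank[OF s1, of i j] True c by (simp add: R_def conj_assoc)
    moreover have "card {m \<in> R. m < T2 c} = j"
      using rank[OF s2, of i j] True c by (simp add: R2 conj_assoc)
    ultimately show ?thesis using rank_unique[OF _ x y] by (simp add: R_def)
  qed
qed

section \<open>From words to tableaux\<close>

definition occ :: "nat list \<Rightarrow> nat \<Rightarrow> nat list" where
  "occ w i = filter (\<lambda>k. w ! k = i) [0..<length w]"

definition cntp :: "nat list \<Rightarrow> nat \<Rightarrow> nat \<Rightarrow> nat" where
  "cntp w k i = count_list (take k w) i"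

definition mkT :: "nat list \<Rightarrow> nat list \<Rightarrow> nat \<times> nat \<Rightarrow> nat" where
  "mkT lam w = (\<lambda>(i, j). if (i, j) \<in> cells lam then Suc (occ w i ! j) else 0)"

lemma length_occ: "length (occ w i) = count_list w i"
proof -
  have "{ia. ia < length w \<and> w ! ([0..<length w] ! ia) = i} = {t. t < length w \<and> w ! t = i}"
    by auto
  then have "length (occ w i) = card {t. t < length w \<and> w ! t = i}"
    by (simp add: occ_def length_filter_conv_card)
  also have "\<dots> = count_list w i"
    by (simp add: count_list_eq_length_filter length_filter_conv_card eq_commute)
  finally show ?thesis .
qed

lemma length_filter_prefix:
  assumes "k \<le> length w"
  shows "length (filter (\<lambda>t. w ! t = i) [0..<k]) = cntp w k i"
proof -
  have "filter (\<lambda>t. w ! t = i) [0..<k] = occ (take k w) i"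
    unfolding occ_def using assms by (auto intro!: filter_cong)
  then show ?thesis by (simp add: length_occ cntp_def)
qed

lemma occ_cntp:
  assumes "k < length w" "w ! k = i"
  shows "occ w i ! cntp w k i = k \<and> cntp w k i < length (occ w i)"
proof -
  have u: "[0..<length w] = [0..<k] @ k # [Suc k..<length w]"
    using assms(1) by (metis le_add1 less_imp_le_nat upt_add_eq_append upt_conv_Cons add_0 le_add_diff_inverse)
  have o: "occ w i = filter (\<lambda>t. w ! t = i) [0..<k] @ k # filter (\<lambda>t. w ! t = i) [Suc k..<length w]"
    unfolding occ_def by (subst u) (simp add: assms(2))
  have l: "length (filter (\<lambda>t. w ! t = i) [0..<k]) = cntp w k i"
    using assms(1) by (intro length_filter_prefix) simp
  show ?thesis unfolding o using l by (simp add: nth_append)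
qed

lemma occ_props:
  assumes "j < length (occ w i)"
  shows "occ w i ! j < length w \<and> w ! (occ w i ! j) = i \<and> cntp w (occ w i ! j) i = j"
proof -
  have m: "occ w i ! j \<in> set (occ w i)" using assms by simp
  then have a: "occ w i ! j < length w" "w ! (occ w i ! j) = i" by (auto simp: occ_def)
  have d: "distinct (occ w i)" by (simp add: occ_def)
  have "occ w i ! cntp w (occ w i ! j) i = occ w i ! j" "cntp w (occ w i ! j) i < length (occ w i)"
    using occ_cntp[OF a] by auto
  then have "cntp w (occ w i ! j) i = j" using nth_eq_iff_index_eq[OF d _ assms] by blast
  then show ?thesis using a by simp
qed

lemma cntp_mono: "k \<le> k' \<Longrightarrow> cntp w k i \<le> cntp w k' i"
proof -
  assume kk: "k \<le> k'"
  have "take k w = take k (take k' w)" using kk by (simp add: min_def)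
  moreover have "count_list (take k xs) i \<le> count_list xs i" for xs :: "nat list"
    by (metis append_take_drop_id count_list_append le_add1)
  ultimately show ?thesis unfolding cntp_def by metis
qed

lemma cntp_Suc: "k < length w \<Longrightarrow> cntp w (Suc k) i = cntp w k i + (if w ! k = i then 1 else 0)"
  by (simp add: cntp_def take_Suc_conv_app_nth)

lemma occ_sorted: "j < j' \<Longrightarrow> j' < length (occ w i) \<Longrightarrow> occ w i ! j < occ w i ! j'"
proof -
  assume "j < j'" "j' < length (occ w i)"
  moreover have "sorted_wrt (<) (occ w i)" unfolding occ_def by (intro sorted_wrt_filter) simp
  ultimately show ?thesis by (simp add: sorted_wrt_nth_less)
qed

context
  fixes lam w
  assumes wW: "w \<in> Wg lam"
begin

lemma w_len: "length w = sum_list lam"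
  using wW by (rule length_Wg)

lemma w_cnt: "i < length lam \<Longrightarrow> count_list w i = lam ! i"
  using wW by (simp add: Wg_def)

lemma w_set: "k < length w \<Longrightarrow> w ! k < length lam"
  using wW by (auto simp: Wg_def)

lemma w_lat: "k \<le> length w \<Longrightarrow> Suc i < length lam \<Longrightarrow> cntp w k (Suc i) \<le> cntp w k i"
  using wW by (simp add: Wg_def latg_def cntp_def)

lemma occ_len: "i < length lam \<Longrightarrow> length (occ w i) = lam ! i"
  by (simp add: length_occ w_cnt)

lemma mkT_cell: "(i, j) \<in> cells lam \<Longrightarrow> mkT lam w (i, j) = Suc (occ w i ! j)"
  by (simp add: mkT_def)

lemma cellsD: "(i, j) \<in> cells lam \<Longrightarrow> i < length lam \<and> j < length (occ w i)"
  by (simp add: cells_def occ_len)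

lemma mkT_inj: "inj_on (mkT lam w) (cells lam)"
proof
  fix x y assume x: "x \<in> cells lam" and y: "y \<in> cells lam" and e: "mkT lam w x = mkT lam w y"
  obtain i j where xi: "x = (i, j)" by fastforce
  obtain i' j' where yi: "y = (i', j')" by fastforce
  have e2: "occ w i ! j = occ w i' ! j'" using e x y xi yi by (simp add: mkT_cell)
  have j: "j < length (occ w i)" and j': "j' < length (occ w i')" using cellsD x y xi yi by auto
  have "i = i'" using occ_props[OF j] occ_props[OF j'] e2 by metis
  moreover have "distinct (occ w i)" by (simp add: occ_def)
  ultimately have "j = j'" using e2 j j' nth_eq_iff_index_eq by metis
  then show "x = y" using xi yi \<open>i = i'\<close> by simp
qed

lemma mkT_img: "mkT lam w ` cells lam = {1..sum_list lam}"
proof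
  show "mkT lam w ` cells lam \<subseteq> {1..sum_list lam}"
  proof
    fix m assume "m \<in> mkT lam w ` cells lam"
    then obtain i j where c: "(i, j) \<in> cells lam" "m = mkT lam w (i, j)" by auto
    then have "occ w i ! j < length w" using cellsD occ_props by blast
    then show "m \<in> {1..sum_list lam}" using c by (simp add: mkT_cell w_len)
  qed
  show "{1..sum_list lam} \<subseteq> mkT lam w ` cells lam"
  proof
    fix m assume m: "m \<in> {1..sum_list lam}"
    define k where "k = m - 1"
    have k: "k < length w" using m w_len unfolding k_def by auto
    define i where "i = w ! k"
    have i: "i < length lam" using w_set[OF k] by (simp add: i_def)
    have oc: "occ w i ! cntp w k i = k" "cntp w k i < length (occ w i)"
      using occ_cntp[OF k] by (auto simp: i_def)
    have c: "(i, cntp w k i) \<in> cells lam" using oc(2) i by (simp add: cells_def occ_len)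
    have "mkT lam w (i, cntp w k i) = m" using c oc m by (simp add: mkT_cell k_def)
    then show "m \<in> mkT lam w ` cells lam" using c by (metis image_eqI)
  qed
qed

lemma mkT_syt:
  shows "syt lam (mkT lam w)"
  unfolding syt_def
proof (intro conjI allI impI)
  show "bij_betw (mkT lam w) (cells lam) {1..sum_list lam}"
    using mkT_inj mkT_img by (simp add: bij_betw_def)
next
  fix i j assume "(i, j) \<in> cells lam \<and> (i, Suc j) \<in> cells lam"
  then show "mkT lam w (i, j) < mkT lam w (i, Suc j)"
    using cellsD occ_sorted by (simp add: mkT_cell)
next
  fix i j assume a: "(i, j) \<in> cells lam \<and> (Suc i, j) \<in> cells lam"
  have j1: "j < length (occ w (Suc i))" and si: "Suc i < length lam" using cellsD a by auto
  have j0: "j < length (occ w i)" using cellsD a by auto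
  define k where "k = occ w (Suc i) ! j"
  have k: "k < length w" "w ! k = Suc i" "cntp w k (Suc i) = j"
    using occ_props[OF j1] by (auto simp: k_def)
  have "cntp w (Suc k) (Suc i) = Suc j" using cntp_Suc[OF k(1)] k by simp
  then have "Suc j \<le> cntp w (Suc k) i" using w_lat[of "Suc k" i] k(1) si by simp
  then have ge: "Suc j \<le> cntp w k i" using cntp_Suc[OF k(1), of i] k(2) by simp
  define k' where "k' = occ w i ! j"
  have k': "cntp w k' i = j" using occ_props[OF j0] by (simp add: k'_def)
  have "k' < k"
  proof (rule ccontr)
    assume "\<not> k' < k"
    then have "cntp w k i \<le> cntp w k' i" by (intro cntp_mono) simp
    then show False using ge k' by simp
  qed
  then show "mkT lam w (i, j) < mkT lam w (Suc i, j)"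
    using a by (simp add: mkT_cell k_def k'_def)
next
  fix c assume "c \<notin> cells lam"
  then show "mkT lam w c = 0" by (cases c) (auto simp: mkT_def)
qed

lemma mkT_row: "m \<in> {1..sum_list lam} \<Longrightarrow> row_of lam (mkT lam w) m = w ! (m - 1)"
proof -
  assume m: "m \<in> {1..sum_list lam}"
  define k where "k = m - 1"
  have k: "k < length w" using m w_len unfolding k_def by auto
  define i where "i = w ! k"
  have i: "i < length lam" using w_set[OF k] by (simp add: i_def)
  have oc: "occ w i ! cntp w k i = k" "cntp w k i < length (occ w i)"
    using occ_cntp[OF k] by (auto simp: i_def)
  have c: "(i, cntp w k i) \<in> cells lam" using oc(2) i by (simp add: cells_def occ_len)
  have "mkT lam w (i, cntp w k i) = m" using c oc m by (simp add: mkT_cell k_def)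
  then have "inv_into (cells lam) (mkT lam w) m = (i, cntp w k i)"
    using inv_into_f_eq[OF mkT_inj c] by simp
  then show ?thesis by (simp add: row_of_def i_def k_def)
qed

lemma rw_mkT: "rw lam (mkT lam w) = w"
proof (rule nth_equalityI)
  show "length (rw lam (mkT lam w)) = length w" by (simp add: rw_def w_len del: upt_Suc)
  fix k assume "k < length (rw lam (mkT lam w))"
  then have k: "k < sum_list lam" by (simp add: rw_def del: upt_Suc)
  then show "rw lam (mkT lam w) ! k = w ! k"
    using mkT_row[of "Suc k"] by (simp add: rw_def del: upt_Suc)
qed

end

lemma rw_bij:
  assumes d: "decr lam"
  shows "bij_betw (rw lam) {T. syt lam T \<and> des lam T = i} {w \<in> Wg lam. card (wdesc w) = i}"
proof (rule bij_betwI')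
  fix T1 T2 assume "T1 \<in> {T. syt lam T \<and> des lam T = i}" "T2 \<in> {T. syt lam T \<and> des lam T = i}"
  then show "(rw lam T1 = rw lam T2) = (T1 = T2)" using rw_inj by auto
next
  fix T assume "T \<in> {T. syt lam T \<and> des lam T = i}"
  then show "rw lam T \<in> {w \<in> Wg lam. card (wdesc w) = i}"
    using rw_Wg[OF _ d] desc_rw by (auto simp: des_def)
next
  fix w assume w: "w \<in> {w \<in> Wg lam. card (wdesc w) = i}"
  then have wW: "w \<in> Wg lam" by simp
  have "syt lam (mkT lam w)" by (rule mkT_syt[OF wW])
  moreover have "rw lam (mkT lam w) = w" by (rule rw_mkT[OF wW])
  ultimately show "\<exists>T\<in>{T. syt lam T \<and> des lam T = i}. w = rw lam T"
    using w desc_rw by (auto simp: des_def intro!: bexI[of _ "mkT lam w"])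
qed

lemma f_poly_words:
  assumes "decr lam"
  shows "f_poly lam i = (\<Sum>w\<in>{w \<in> Wg lam. card (wdesc w) = i}. qvar ^ (\<Sum>(wdesc w)))"
proof -
  have "f_poly lam i = (\<Sum>T\<in>{T. syt lam T \<and> des lam T = i}. qvar ^ (\<Sum>(wdesc (rw lam T))))"
    unfolding f_poly_def maj_def by (intro sum.cong) (auto simp: desc_rw)
  also have "\<dots> = (\<Sum>w\<in>{w \<in> Wg lam. card (wdesc w) = i}. qvar ^ (\<Sum>(wdesc w)))"
    by (rule sum.reindex_bij_betw[OF rw_bij[OF assms], of "\<lambda>w. qvar ^ (\<Sum>(wdesc w))"])
  finally show ?thesis .
qed

section \<open>Recursion on words with three letters\<close>

definition lat3 :: "nat list \<Rightarrow> bool" where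
  "lat3 w \<longleftrightarrow> (\<forall>k \<le> length w. count_list (take k w) 1 \<le> count_list (take k w) 0 \<and>
                                count_list (take k w) 2 \<le> count_list (take k w) 1)"

lemma all_less3: "(\<forall>i<(3::nat). P i) \<longleftrightarrow> P 0 \<and> P 1 \<and> P 2"
  unfolding numeral_3_eq_3 by (auto simp: less_Suc_eq numeral_2_eq_2)

lemma all_Suc_less3: "(\<forall>i. Suc i < (3::nat) \<longrightarrow> P i) \<longleftrightarrow> P 0 \<and> P 1"
  by (auto simp: numeral_3_eq_3 less_Suc_eq)

lemma Wg3: "w \<in> Wg [a, b, c] \<longleftrightarrow> (\<forall>x\<in>set w. x < 3) \<and> count_list w 0 = a \<and> count_list w 1 = b \<and> count_list w 2 = c \<and> lat3 w"
proof -
  have l: "latg 3 w = lat3 w"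
    unfolding latg_def lat3_def all_Suc_less3 by (simp add: numeral_2_eq_2)
  have len3: "length [a, b, c] = 3" by simp
  have cc: "(\<forall>i<3. count_list w i = [a, b, c] ! i) \<longleftrightarrow>
        count_list w 0 = a \<and> count_list w 1 = b \<and> count_list w 2 = c"
    unfolding all_less3 by (simp add: numeral_2_eq_2)
  show ?thesis unfolding Wg_def mem_Collect_eq len3 cc l by (simp only: conj_assoc)
qed

lemma lat3_snoc: "lat3 (u @ [r]) \<longleftrightarrow> lat3 u \<and> count_list (u @ [r]) 1 \<le> count_list (u @ [r]) 0 \<and>
                                count_list (u @ [r]) 2 \<le> count_list (u @ [r]) 1"
proof
  assume a: "lat3 (u @ [r])"
  have "lat3 u"
    unfolding lat3_def
  proof (intro allI impI)
    fix k assume "k \<le> length u"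
    then have "take k (u @ [r]) = take k u" by simp
    then show "count_list (take k u) 1 \<le> count_list (take k u) 0 \<and> count_list (take k u) 2 \<le> count_list (take k u) 1"
      using a \<open>k \<le> length u\<close> unfolding lat3_def by (metis le_SucI length_append_singleton)
  qed
  moreover have "take (length (u @ [r])) (u @ [r]) = u @ [r]" by simp
  ultimately show "lat3 u \<and> count_list (u @ [r]) 1 \<le> count_list (u @ [r]) 0 \<and>
                                count_list (u @ [r]) 2 \<le> count_list (u @ [r]) 1"
    using a unfolding lat3_def by (metis order_refl)
next
  assume a: "lat3 u \<and> count_list (u @ [r]) 1 \<le> count_list (u @ [r]) 0 \<and>
                                count_list (u @ [r]) 2 \<le> count_list (u @ [r]) 1"
  show "lat3 (u @ [r])"
    unfolding lat3_def
  proof (intro allI impI)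
    fix k assume k: "k \<le> length (u @ [r])"
    show "count_list (take k (u @ [r])) 1 \<le> count_list (take k (u @ [r])) 0 \<and>
          count_list (take k (u @ [r])) 2 \<le> count_list (take k (u @ [r])) 1"
    proof (cases "k \<le> length u")
      case True
      then have "take k (u @ [r]) = take k u" by simp
      then show ?thesis using a True unfolding lat3_def by simp
    next
      case False
      then have "take k (u @ [r]) = u @ [r]" using k by simp
      then show ?thesis using a by simp
    qed
  qed
qed

lemma snoc_Wg:
  assumes r: "r < 3"
  shows "u @ [r] \<in> Wg [a, b, c] \<longleftrightarrow>
         u \<in> Wg [dd 0 a r, dd 1 b r, dd 2 c r] \<and> cnt a b c r \<noteq> 0 \<and> b \<le> a \<and> c \<le> b"
proof -
  have r3: "r = 0 \<or> r = 1 \<or> r = 2" using r by auto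
  show ?thesis
    unfolding Wg3 lat3_snoc using r3
    by (auto simp: dd_def cnt_def)
qed

lemma wdesc_sub: "wdesc u \<subseteq> {..<length u}"
  by (auto simp: wdesc_def)

lemma wdesc_snoc:
  assumes "u \<noteq> []"
  shows "wdesc (u @ [r]) = wdesc u \<union> (if last u < r then {length u} else {})"
proof -
  have l: "u ! (length u - 1) = last u" using assms by (simp add: last_conv_nth)
  show ?thesis
  proof (rule set_eqI)
    fix m
    show "m \<in> wdesc (u @ [r]) \<longleftrightarrow> m \<in> wdesc u \<union> (if last u < r then {length u} else {})"
    proof (cases "m < length u")
      case True
      then show ?thesis by (auto simp: wdesc_def nth_append)
    next
      case False
      have "length u \<ge> 1" using assms by (cases u) auto
      then show ?thesis using assms l False
        by (cases "m = length u") (auto simp: wdesc_def nth_append)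
    qed
  qed
qed

definition WS :: "nat \<Rightarrow> nat \<Rightarrow> nat \<Rightarrow> nat \<Rightarrow> nat \<Rightarrow> int poly" where
  "WS i a b c r = (\<Sum>w\<in>Wg [a, b, c]. if w \<noteq> [] \<and> last w = r \<and> card (wdesc w) = i then qvar ^ (\<Sum>(wdesc w)) else 0)"

lemma WS_invalid:
  assumes "r < 3" "\<not> (b \<le> a \<and> c \<le> b) \<or> cnt a b c r = 0"
  shows "WS i a b c r = 0"
  unfolding WS_def
proof (rule sum.neutral, rule ballI)
  fix w assume w: "w \<in> Wg [a, b, c]"
  show "(if w \<noteq> [] \<and> last w = r \<and> card (wdesc w) = i then qvar ^ (\<Sum>(wdesc w)) else 0) = 0"
  proof (cases "w \<noteq> [] \<and> last w = r")
    case True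
    then have "w = butlast w @ [r]" by (metis append_butlast_last_id)
    then have "butlast w @ [r] \<in> Wg [a, b, c]" using w by simp
    then show ?thesis using snoc_Wg[OF assms(1)] assms(2) by blast
  qed auto
qed

lemma Wg_100: "Wg [1, 0, 0] = {[0]}"
proof
  show "{[0]} \<subseteq> Wg [1, 0, 0]" by (simp add: Wg3 lat3_def le_Suc_eq)
  show "Wg [1, 0, 0] \<subseteq> {[0]}"
  proof
    fix w assume w: "w \<in> Wg [1, 0, 0]"
    then have "length w = 1" using length_Wg by fastforce
    then obtain x where x: "w = [x]" by (metis One_nat_def length_0_conv length_Suc_conv)
    have "count_list w 0 = 1" using w by (simp add: Wg3)
    then have "x = 0" using x by (auto split: if_splits)
    then show "w \<in> {[0]}" using x by simp
  qed
qed

lemma WS_base: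
  assumes "r < 3" "b \<le> a" "c \<le> b" "cnt a b c r \<noteq> 0" "a + b + c = 1"
  shows "WS i a b c r = (if i = 0 then 1 else 0)"
proof -
  have abc: "a = 1" "b = 0" "c = 0" using assms by auto
  have r0: "r = 0" using assms abc by (auto simp: cnt_def split: if_splits)
  have wd: "wdesc [0] = {}" by (auto simp: wdesc_def)
  show ?thesis unfolding WS_def abc r0 Wg_100 by (simp add: wd)
qed

lemma sum_last3:
  fixes f :: "nat list \<Rightarrow> nat \<Rightarrow> int poly"
  assumes "u \<noteq> []" "last u < 3"
  shows "f u (last u) = (\<Sum>r'<3. if last u = r' then f u r' else 0)"
proof -
  have "(\<Sum>r'<3. if last u = r' then f u r' else 0) = (\<Sum>r'\<in>{last u}. f u r')"
    using assms(2) by (intro sum.mono_neutral_cong_right) auto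
  then show ?thesis by simp
qed

lemma WS_step:
  assumes r: "r < 3" and v: "b \<le> a" "c \<le> b" "cnt a b c r \<noteq> 0" and n1: "a + b + c \<noteq> 1"
  shows "WS i a b c r = (\<Sum>r'<3. if r' < r then (if i = 0 then 0 else qvar ^ (a + b + c - 1) * WS (i - 1) (dd 0 a r) (dd 1 b r) (dd 2 c r) r')
                   else WS i (dd 0 a r) (dd 1 b r) (dd 2 c r) r')"
proof -
  define lam' where "lam' = [dd 0 a r, dd 1 b r, dd 2 c r]"
  define g where "g w = (if w \<noteq> [] \<and> last w = r \<and> card (wdesc w) = i then qvar ^ (\<Sum>(wdesc w)) else (0::int poly))" for w
  have mem: "u @ [r] \<in> Wg [a, b, c] \<longleftrightarrow> u \<in> Wg lam'" for u
    using snoc_Wg[OF r] v unfolding lam'_def by blast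
  have lenu: "length u = a + b + c - 1" if "u \<in> Wg lam'" for u
  proof -
    have "length (u @ [r]) = sum_list [a, b, c]" using that mem length_Wg by blast
    then show ?thesis by simp
  qed
  have ne: "u \<noteq> []" if "u \<in> Wg lam'" for u
  proof -
    have "a + b + c \<ge> 1" using v by (auto simp: cnt_def split: if_splits)
    then show ?thesis using lenu[OF that] n1 by auto
  qed
  have last3: "last u < 3" if "u \<in> Wg lam'" for u
    using ne[OF that] that last_in_set[of u] by (auto simp: lam'_def Wg3)
  have S1: "WS i a b c r = (\<Sum>u\<in>Wg lam'. g (u @ [r]))"
  proof -
    have "WS i a b c r = (\<Sum>w\<in>(\<lambda>u. u @ [r]) ` Wg lam'. g w)"
      unfolding WS_def g_def[symmetric]
    proof (rule sum.mono_neutral_cong_right)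
      show "finite (Wg [a, b, c])" by (rule finite_Wg)
      show "(\<lambda>u. u @ [r]) ` Wg lam' \<subseteq> Wg [a, b, c]" using mem by auto
      show "\<forall>w\<in>Wg [a, b, c] - (\<lambda>u. u @ [r]) ` Wg lam'. g w = 0"
      proof
        fix w assume w: "w \<in> Wg [a, b, c] - (\<lambda>u. u @ [r]) ` Wg lam'"
        show "g w = 0"
        proof (cases "w \<noteq> [] \<and> last w = r")
          case True
          then have e: "w = butlast w @ [r]" by (metis append_butlast_last_id)
          then have "butlast w \<in> Wg lam'" using w mem by (metis DiffD1)
          then show ?thesis using w e by blast
        qed (auto simp: g_def)
      qed
    qed simp
    also have "\<dots> = (\<Sum>u\<in>Wg lam'. g (u @ [r]))"
      by (simp add: sum.reindex inj_on_def)
    finally show ?thesis .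
  qed
  define h where "h u r' = (if r' < r then (if i = 0 then 0 else qvar ^ (a + b + c - 1) *
        (if u \<noteq> [] \<and> last u = r' \<and> card (wdesc u) = i - 1 then qvar ^ (\<Sum>(wdesc u)) else 0))
       else (if u \<noteq> [] \<and> last u = r' \<and> card (wdesc u) = i then qvar ^ (\<Sum>(wdesc u)) else (0::int poly)))" for u r'
  have S2: "g (u @ [r]) = (\<Sum>r'<3. h u r')" if u: "u \<in> Wg lam'" for u
  proof -
    have fin: "finite (wdesc u)" using wdesc_sub finite_subset by blast
    have nin: "length u \<notin> wdesc u" using wdesc_sub by blast
    have hz: "h u r' = 0" if "r' \<noteq> last u" for r' using that by (simp add: h_def)
    have "(\<Sum>r'<3. h u r') = (\<Sum>r'\<in>{last u}. h u r')"
      using last3[OF u] hz by (intro sum.mono_neutral_cong_right) auto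
    also have "\<dots> = h u (last u)" by simp
    also have "\<dots> = g (u @ [r])"
    proof (cases "last u < r")
      case True
      have wd: "wdesc (u @ [r]) = insert (length u) (wdesc u)" using wdesc_snoc[OF ne[OF u]] True by simp
      have c: "card (wdesc (u @ [r])) = Suc (card (wdesc u))" using wd fin nin by simp
      have sm: "\<Sum>(wdesc (u @ [r])) = length u + \<Sum>(wdesc u)" using wd fin nin by simp
      show ?thesis using True ne[OF u] c sm lenu[OF u]
        by (auto simp: h_def g_def power_add)
    next
      case False
      have wd: "wdesc (u @ [r]) = wdesc u" using wdesc_snoc[OF ne[OF u]] False by simp
      show ?thesis using False ne[OF u] wd by (auto simp: h_def g_def)
    qed
    finally show ?thesis by simp
  qed
  have "WS i a b c r = (\<Sum>u\<in>Wg lam'. \<Sum>r'<3. h u r')" using S1 S2 by simp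
  also have "\<dots> = (\<Sum>r'<3. \<Sum>u\<in>Wg lam'. h u r')" by (rule sum.swap)
  also have "\<dots> = (\<Sum>r'<3. if r' < r then (if i = 0 then 0 else qvar ^ (a + b + c - 1) * WS (i - 1) (dd 0 a r) (dd 1 b r) (dd 2 c r) r')
                   else WS i (dd 0 a r) (dd 1 b r) (dd 2 c r) r')"
  proof (rule sum.cong[OF refl])
    fix r' assume "r' \<in> {..<3::nat}"
    show "(\<Sum>u\<in>Wg lam'. h u r') = (if r' < r then (if i = 0 then 0 else qvar ^ (a + b + c - 1) * WS (i - 1) (dd 0 a r) (dd 1 b r) (dd 2 c r) r')
                   else WS i (dd 0 a r) (dd 1 b r) (dd 2 c r) r')"
      by (simp add: h_def WS_def lam'_def sum_distrib_left)
  qed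
  finally show ?thesis .
qed

lemma WS_rec: "r < 3 \<Longrightarrow> WS i a b c r = RR 1 (\<lambda>a i b c r. WS i a b c r) a i b c r"
proof -
  assume r: "r < 3"
  show ?thesis
  proof (cases "\<not> (b \<le> a \<and> c \<le> b) \<or> cnt a b c r = 0")
    case True
    then show ?thesis using WS_invalid[OF r True] by (simp add: RR_def)
  next
    case False
    show ?thesis
    proof (cases "a + b + c = 1")
      case True
      then show ?thesis using False WS_base[OF r _ _ _ True] by (simp add: RR_def)
    next
      case F2: False
      then show ?thesis using False WS_step[OF r _ _ _ F2] by (simp add: RR_def)
    qed
  qed
qed

lemma RR_scale: "e * RR 1 F a i b c r = RR e (\<lambda>a i b c r. e * F a i b c r) a i b c r"
  unfolding RR_def by (simp add: sum_distrib_left if_distrib mult.left_commute cong: if_cong)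

lemma WS_V: "b \<le> 3 \<Longrightarrow> c \<le> 3 \<Longrightarrow> r \<le> 2 \<Longrightarrow> Dp * WS i a b c r = V a i b c r"
proof (induction "7 * a + b + c" arbitrary: a b c i r rule: less_induct)
  case less
  show ?case
  proof (cases "a = 0")
    case True
    have "WS i a b c r = 0"
    proof (rule WS_invalid)
      show "r < 3" using less.prems by simp
      show "\<not> (b \<le> a \<and> c \<le> b) \<or> cnt a b c r = 0" using True by (auto simp: cnt_def)
    qed
    moreover have "V a i b c r = 0" using True by (simp add: V_def TL_def)
    ultimately show ?thesis by simp
  next
    case False
    have r3: "r < 3" using less.prems by simp
    have "Dp * WS i a b c r = RR Dp (\<lambda>a i b c r. Dp * WS i a b c r) a i b c r"
      by (subst WS_rec[OF r3]) (rule RR_scale)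
    also have "\<dots> = RR Dp V a i b c r"
    proof (rule RR_cong)
      fix j r' :: nat assume r': "r' < 3" and v: "b \<le> a" "c \<le> b" "cnt a b c r \<noteq> 0"
      have lt: "7 * dd 0 a r + dd 1 b r + dd 2 c r < 7 * a + b + c"
        using v False r3 by (auto simp: dd_def cnt_def)
      have b3: "dd 1 b r \<le> 3" "dd 2 c r \<le> 3" using less.prems by (auto simp: dd_def)
      show "Dp * WS j (dd 0 a r) (dd 1 b r) (dd 2 c r) r' = V (dd 0 a r) j (dd 1 b r) (dd 2 c r) r'"
        using less.hyps[OF lt b3] r' by simp
    qed
    also have "\<dots> = V a i b c r"
      using check_all[of a b c r i] False less.prems by simp
    finally show ?thesis .
  qed
qed

lemma f_poly_WS:
  assumes n: "n \<ge> 3"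
  shows "f_poly [n, 3, 3] i = (\<Sum>r<3. WS i n 3 3 r)"
proof -
  have d: "decr [n, 3, 3]" using n by (auto simp: decr_def nth_Cons split: nat.splits)
  have "f_poly [n, 3, 3] i = (\<Sum>w\<in>{w \<in> Wg [n, 3, 3]. card (wdesc w) = i}. qvar ^ (\<Sum>(wdesc w)))"
    by (rule f_poly_words[OF d])
  also have "\<dots> = (\<Sum>w\<in>Wg [n, 3, 3]. if card (wdesc w) = i then qvar ^ (\<Sum>(wdesc w)) else 0)"
    by (simp add: sum.inter_filter[OF finite_Wg])
  also have "\<dots> = (\<Sum>w\<in>Wg [n, 3, 3]. \<Sum>r<3. if w \<noteq> [] \<and> last w = r \<and> card (wdesc w) = i then qvar ^ (\<Sum>(wdesc w)) else 0)"
  proof (rule sum.cong[OF refl])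
    fix w assume w: "w \<in> Wg [n, 3, 3]"
    have ne: "w \<noteq> []" using length_Wg[OF w] by auto
    have l3: "last w < 3" using w ne last_in_set[of w] by (auto simp: Wg3)
    have "(\<Sum>r<3. if w \<noteq> [] \<and> last w = r \<and> card (wdesc w) = i then qvar ^ (\<Sum>(wdesc w)) else 0)
        = (\<Sum>r\<in>{last w}. if card (wdesc w) = i then qvar ^ (\<Sum>(wdesc w)) else (0::int poly))"
      using l3 ne by (intro sum.mono_neutral_cong_right) auto
    then show "(if card (wdesc w) = i then qvar ^ (\<Sum>(wdesc w)) else 0) =
        (\<Sum>r<3. if w \<noteq> [] \<and> last w = r \<and> card (wdesc w) = i then qvar ^ (\<Sum>(wdesc w)) else 0)" by simp
  qed
  also have "\<dots> = (\<Sum>r<3. WS i n 3 3 r)"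
    unfolding WS_def by (rule sum.swap)
  finally show ?thesis .
qed



fun gb :: "nat \<Rightarrow> nat \<Rightarrow> int poly" where
  "gb m 0 = 1"
| "gb 0 (Suc k) = 0"
| "gb (Suc m) (Suc k) = gb m k + qvar ^ Suc k * gb m (Suc k)"

lemma qpoch_0: "qpoch 0 = 1"
  by (simp add: qpoch_def)

lemma qpoch_Suc: "qpoch (Suc m) = qpoch m * (1 - qvar ^ Suc m)"
  by (simp add: qpoch_def atLeastAtMostSuc_conv mult.commute)

lemma gb_zero: "m < k \<Longrightarrow> gb m k = 0"
proof (induction m arbitrary: k)
  case 0 then show ?case by (cases k) auto
next
  case (Suc m) then show ?case by (cases k) auto
qed

lemma gb_qpoch: "k \<le> m \<Longrightarrow> gb m k * qpoch k * qpoch (m - k) = qpoch m"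
proof (induction m arbitrary: k)
  case 0 then show ?case by (simp add: qpoch_0)
next
  case (Suc m)
  show ?case
  proof (cases k)
    case 0 then show ?thesis by (simp add: qpoch_0)
  next
    case (Suc k')
    have k': "k' \<le> m" using Suc.prems Suc by simp
    show ?thesis
    proof (cases "k' = m")
      case True
      have z: "gb m (Suc m) = 0" by (rule gb_zero) simp
      have ih: "gb m m * qpoch m = qpoch m" using Suc.IH[of m] by (simp add: qpoch_0)
      have "gb (Suc m) k * qpoch k * qpoch (Suc m - k) = gb m m * qpoch m * (1 - qvar ^ Suc m)"
        using True Suc z by (simp add: qpoch_Suc qpoch_0 mult.assoc)
      then show ?thesis using ih by (simp add: qpoch_Suc)
    next
      case False
      then have lt: "k' < m" using k' by simp
      have e: "m - k' = Suc (m - Suc k')" using lt by simp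
      have qe: "qpoch (m - k') = qpoch (m - Suc k') * (1 - qvar ^ (m - k'))"
        unfolding e by (rule qpoch_Suc)
      have IH1: "gb m k' * qpoch k' * qpoch (m - k') = qpoch m" using Suc.IH[OF k'] .
      have IH2: "gb m (Suc k') * qpoch (Suc k') * qpoch (m - Suc k') = qpoch m" using Suc.IH lt by simp
      have pw: "qvar ^ Suc k' * qvar ^ (m - k') = (qvar ^ Suc m :: int poly)"
        by (simp add: power_add[symmetric]) (use lt in simp)
      have "gb (Suc m) k * qpoch k * qpoch (Suc m - k)
          = (gb m k' + qvar ^ Suc k' * gb m (Suc k')) * (qpoch k' * (1 - qvar ^ Suc k')) * qpoch (m - k')"
        using Suc by (simp add: qpoch_Suc)
      also have "\<dots> = (gb m k' * qpoch k' * qpoch (m - k')) * (1 - qvar ^ Suc k')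
          + qvar ^ Suc k' * (gb m (Suc k') * (qpoch k' * (1 - qvar ^ Suc k')) * qpoch (m - Suc k')) * (1 - qvar ^ (m - k'))"
        unfolding qe by (simp add: algebra_simps)
      also have "\<dots> = qpoch m * (1 - qvar ^ Suc k') + qvar ^ Suc k' * qpoch m * (1 - qvar ^ (m - k'))"
        using IH1 IH2 by (simp add: qpoch_Suc mult.assoc)
      also have "\<dots> = qpoch (Suc m)"
        unfolding qpoch_Suc pw[symmetric] by (simp add: algebra_simps)
      finally show ?thesis .
    qed
  qed
qed

lemma one_minus_qvar_nz: "j \<ge> 1 \<Longrightarrow> 1 - qvar ^ j \<noteq> (0 :: int poly)"
proof
  assume j: "j \<ge> 1" and z: "1 - qvar ^ j = (0 :: int poly)"
  have "poly (1 - qvar ^ j) (2::int) = 0" using z by simp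
  then have "(2::int) ^ j = 1" by (simp add: qvar_def)
  moreover have "(2::int) ^ 1 \<le> 2 ^ j" by (rule power_increasing) (use j in auto)
  ultimately show False by simp
qed

lemma qpoch_nz: "qpoch m \<noteq> 0"
  unfolding qpoch_def using one_minus_qvar_nz by (simp add: prod_zero_iff)

lemma qbinom_gb: "N \<le> M \<Longrightarrow> qbinom (int M) (int N) = gb M N"
proof -
  assume NM: "N \<le> M"
  have e: "nat (int M - int N) = M - N" using NM by simp
  have "qpoch M = gb M N * (qpoch N * qpoch (M - N))" using gb_qpoch[OF NM] by (simp add: mult.assoc)
  then show ?thesis using NM qpoch_nz
    by (simp add: qbinom_def e del: of_nat_diff)
qed

lemma qpoch_split: "N \<le> M \<Longrightarrow> qpoch M = qpoch (M - N) * (\<Prod>t<N. 1 - qvar ^ (M - t))"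
proof (induction N)
  case 0 then show ?case by simp
next
  case (Suc N)
  have e: "M - N = Suc (M - Suc N)" using Suc.prems by simp
  have "qpoch M = qpoch (M - N) * (\<Prod>t<N. 1 - qvar ^ (M - t))" using Suc by simp
  also have "qpoch (M - N) = qpoch (M - Suc N) * (1 - qvar ^ (M - N))"
    by (subst (1 2) e) (simp only: qpoch_Suc)
  finally show ?case by (simp add: mult_ac)
qed

lemma qb_prod: "qbinom (int M) (int N) * qpoch N = (\<Prod>t<N. 1 - qvar ^ (M - t))"
proof (cases "N \<le> M")
  case True
  have "gb M N * qpoch N * qpoch (M - N) = qpoch (M - N) * (\<Prod>t<N. 1 - qvar ^ (M - t))"
    using gb_qpoch[OF True] qpoch_split[OF True] by simp
  then have "gb M N * qpoch N = (\<Prod>t<N. 1 - qvar ^ (M - t))"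
    using qpoch_nz[of "M - N"] by (simp add: mult.commute)
  then show ?thesis using qbinom_gb[OF True] by simp
next
  case False
  have "M \<in> {..<N}" using False by simp
  then have "(\<Prod>t<N. 1 - qvar ^ (M - t)) = (0 :: int poly)"
    by (subst prod_zero_iff) (auto intro!: bexI[of _ M])
  then show ?thesis using False by (simp add: qbinom_def)
qed

fun prodL :: "nat \<Rightarrow> nat \<Rightarrow> int list list" where
  "prodL s 0 = [[1]]"
| "prodL s (Suc N) = mulLL (prodL s N) [[1], shL (s - N) [-1]]"

fun prodC :: "nat \<Rightarrow> nat \<Rightarrow> int list" where
  "prodC M 0 = [1]"
| "prodC M (Suc N) = mulL (prodC M N) (addL [1] (shL (M - N) [-1]))"

fun qpl :: "nat \<Rightarrow> int list" where
  "qpl 0 = [1]"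
| "qpl (Suc k) = mulL (qpl k) (addL [1] (shL (Suc k) [-1]))"

lemma poly_pll_single: "poly (pll [x]) Y = Poly x"
  by (simp add: pll_def)

lemma one_minus: "1 - qvar ^ j = Poly (addL [1] (shL j [-1]))"
  by (simp add: Poly_addL Poly_shL)

lemma one_minus_Y: "1 - qvar ^ (m + j) = poly (pll [[1], shL j [-1]]) (qvar ^ m)"
  by (simp add: pll_def Poly_shL power_add algebra_simps)

lemma qpl_eq: "qpoch k = Poly (qpl k)"
proof (induction k)
  case 0 then show ?case by (simp add: qpoch_0)
next
  case (Suc k) then show ?case by (simp only: qpoch_Suc qpl.simps Poly_mulL one_minus)
qed

lemma prodC_eq: "(\<Prod>t<N. 1 - qvar ^ (M - t)) = Poly (prodC M N)"
proof (induction N)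
  case 0 then show ?case by simp
next
  case (Suc N) then show ?case by (simp only: prod.lessThan_Suc prodC.simps Poly_mulL one_minus)
qed

lemma pll_one: "poly (pll [[1]]) Y = 1"
  by (simp add: pll_def)

lemma prodL_eq: "N \<le> Suc s \<Longrightarrow> (\<Prod>t<N. 1 - qvar ^ (m + s - t)) = poly (pll (prodL s N)) (qvar ^ m)"
proof (induction N)
  case 0 then show ?case by (simp add: pll_one)
next
  case (Suc N)
  have e: "m + s - N = m + (s - N)" using Suc.prems by simp
  have IH: "(\<Prod>t<N. 1 - qvar ^ (m + s - t)) = poly (pll (prodL s N)) (qvar ^ m)" using Suc by simp
  have f: "1 - qvar ^ (m + s - N) = poly (pll [[1], shL (s - N) [-1]]) (qvar ^ m)"
    unfolding e by (rule one_minus_Y)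
  show ?case by (simp only: prod.lessThan_Suc IH f prodL.simps pll_mulLL poly_mult)
qed

lemma Dp_nz: "Dp \<noteq> 0"
  by (simp add: Dp_def Dl_def)

lemma Dp_split:
  assumes "strip_while ((=) 0) Dl = strip_while ((=) 0) (mulL (qpl N1) (mulL (qpl N2) E))"
  shows "Dp = qpoch N1 * qpoch N2 * Poly E"
  using Poly_strip_eq[OF assms] by (simp add: Dp_def qpl_eq Poly_mulL mult.assoc)

lemma term2:
  assumes "strip_while ((=) 0) Dl = strip_while ((=) 0) (mulL (qpl N1) (mulL (qpl N2) E))"
    and "N1 \<le> Suc s1" "N2 \<le> Suc s2"
  shows "Dp * (qvar ^ k * qbinom (int (m + s1)) (int N1) * qbinom (int (m + s2)) (int N2))
       = poly (pll (mulLL [shL k E] (mulLL (prodL s1 N1) (prodL s2 N2)))) (qvar ^ m)"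
proof -
  have "Dp * (qvar ^ k * qbinom (int (m + s1)) (int N1) * qbinom (int (m + s2)) (int N2))
      = qvar ^ k * Poly E * (qbinom (int (m + s1)) (int N1) * qpoch N1) * (qbinom (int (m + s2)) (int N2) * qpoch N2)"
    by (simp add: Dp_split[OF assms(1)] mult_ac)
  also have "\<dots> = poly (pll (mulLL [shL k E] (mulLL (prodL s1 N1) (prodL s2 N2)))) (qvar ^ m)"
    by (simp only: qb_prod prodL_eq[OF assms(2)] prodL_eq[OF assms(3)] pll_mulLL poly_mult
        poly_pll_single Poly_shL mult.assoc)
  finally show ?thesis .
qed

lemma term2C:
  assumes "strip_while ((=) 0) Dl = strip_while ((=) 0) (mulL (qpl N1) (mulL (qpl N2) E))"
    and "N1 \<le> Suc s1"
  shows "Dp * (qvar ^ k * qbinom (int (m + s1)) (int N1) * qbinom (int M2) (int N2))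
       = poly (pll (mulLL [shL k E] (mulLL (prodL s1 N1) [prodC M2 N2]))) (qvar ^ m)"
proof -
  have "Dp * (qvar ^ k * qbinom (int (m + s1)) (int N1) * qbinom (int M2) (int N2))
      = qvar ^ k * Poly E * (qbinom (int (m + s1)) (int N1) * qpoch N1) * (qbinom (int M2) (int N2) * qpoch N2)"
    by (simp add: Dp_split[OF assms(1)] mult_ac)
  also have "\<dots> = poly (pll (mulLL [shL k E] (mulLL (prodL s1 N1) [prodC M2 N2]))) (qvar ^ m)"
    apply (simp only: qb_prod)
    apply (simp only: prodL_eq[OF assms(2)])
    apply (simp only: prodC_eq pll_mulLL poly_mult poly_pll_single Poly_shL mult.assoc)
    done
  finally show ?thesis .
qed

lemma term1:
  assumes "strip_while ((=) 0) Dl = strip_while ((=) 0) (mulL (qpl N1) (mulL (qpl 0) E))"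
    and "N1 \<le> Suc s1"
  shows "Dp * (qvar ^ k * qbinom (int (m + s1)) (int N1))
       = poly (pll (mulLL [shL k E] (prodL s1 N1))) (qvar ^ m)"
proof -
  have "Dp * (qvar ^ k * qbinom (int (m + s1)) (int N1))
      = qvar ^ k * Poly E * (qbinom (int (m + s1)) (int N1) * qpoch N1)"
    by (simp add: Dp_split[OF assms(1)] mult_ac qpoch_0)
  also have "\<dots> = poly (pll (mulLL [shL k E] (prodL s1 N1))) (qvar ^ m)"
    by (simp only: qb_prod prodL_eq[OF assms(2)] pll_mulLL poly_mult
        poly_pll_single Poly_shL mult.assoc)
  finally show ?thesis .
qed

definition sumL :: "nat \<Rightarrow> int list list" where
  "sumL i = addLL (Ltab i 3 3 0) (addLL (Ltab i 3 3 1) (Ltab i 3 3 2))"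

lemma Dp_f:
  assumes "n \<ge> 3"
  shows "Dp * f_poly [n, 3, 3] i = poly (pll (sumL i)) (qvar ^ (n - 3))"
proof -
  have "Dp * f_poly [n, 3, 3] i = (\<Sum>r<3. Dp * WS i n 3 3 r)"
    by (simp add: f_poly_WS[OF assms] sum_distrib_left)
  also have "\<dots> = (\<Sum>r<3. V n i 3 3 r)"
    by (intro sum.cong refl WS_V) auto
  also have "\<dots> = poly (pll (sumL i)) (qvar ^ (n - 3))"
    using assms by (simp add: sum3 V_ge3 sumL_def pll_addLL add.assoc)
  finally show ?thesis .
qed



definition E20 :: "int list" where "E20 = [1,-1,-1,-1,1,3,0,0,-3,-1,1,1,1,-1]"
definition E21 :: "int list" where "E21 = [1,0,-1,-2,-1,2,2,2,-1,-2,-1,0,1]"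
definition E31 :: "int list" where "E31 = [1,0,-1,-1,-1,1,1,1,0,-1]"
definition E22 :: "int list" where "E22 = [1,0,0,-2,-1,0,1,2,0,0,-1]"
definition E42 :: "int list" where "E42 = [1,0,0,-1]"
definition E23 :: "int list" where "E23 = [1,0,0,-1,-1,0,0,1]"
definition E41 :: "int list" where "E41 = [1,0,-1,-1,0,1]"
definition E33 :: "int list" where "E33 = [1,0,0,0,-1]"

definition dchk :: "nat \<Rightarrow> nat \<Rightarrow> int list \<Rightarrow> bool" where
  "dchk N1 N2 E = (strip_while ((=) 0) Dl = strip_while ((=) 0) (mulL (qpl N1) (mulL (qpl N2) E)))"

lemma dchks: "dchk 2 0 E20 \<and> dchk 2 1 E21 \<and> dchk 3 1 E31 \<and> dchk 2 2 E22 \<and> dchk 4 2 E42 \<and>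
   dchk 2 3 E23 \<and> dchk 4 1 E41 \<and> dchk 3 3 E33"
  by code_simp

definition tR1 :: "nat \<Rightarrow> int list \<Rightarrow> nat \<Rightarrow> nat \<Rightarrow> int list list" where
  "tR1 k E s1 N1 = mulLL [shL k E] (prodL s1 N1)"
definition tR2 :: "nat \<Rightarrow> int list \<Rightarrow> nat \<Rightarrow> nat \<Rightarrow> nat \<Rightarrow> nat \<Rightarrow> int list list" where
  "tR2 k E s1 N1 s2 N2 = mulLL [shL k E] (mulLL (prodL s1 N1) (prodL s2 N2))"
definition tR2C :: "nat \<Rightarrow> int list \<Rightarrow> nat \<Rightarrow> nat \<Rightarrow> nat \<Rightarrow> nat \<Rightarrow> int list list" where
  "tR2C k E s1 N1 M2 N2 = mulLL [shL k E] (mulLL (prodL s1 N1) [prodC M2 N2])"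

definition om :: "nat \<Rightarrow> int list" where "om j = addL [1] (shL j [-1])"
definition omY :: "nat \<Rightarrow> int list list" where "omY j = [[1], shL j [-1]]"

definition Al :: "int list list" where
  "Al = mulLL [shL 27 (om 1)] (mulLL (omY 1) (mulLL (omY 2) (mulLL (omY 2) (mulLL (omY 3) (mulLL (omY 3) (omY 4))))))"

definition Bl :: "int list" where
  "Bl = mulL (om 1) (mulL (om 2) (mulL (om 2) (mulL (om 3) (mulL (om 3) (om 4)))))"

lemma fchks:
  "normLL (sumL 2) = normLL (tR1 9 E20 2 2) \<and>
   normLL (sumL 3) = normLL (addLL (tR2 11 E21 2 2 6 1) (tR2C 12 E31 3 3 4 1)) \<and>
   normLL (sumL 4) = normLL (addLL (tR2 15 E22 2 2 5 2) (tR2C 15 E42 4 4 5 2)) \<and>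
   normLL (sumL 5) = normLL (addLL (tR2 21 E23 2 2 4 3) (tR2 20 E41 4 4 6 1)) \<and>
   normLL (addLL (sumL 6) (tR2 28 E42 3 4 3 2)) = normLL (tR2 27 E33 3 3 3 3) \<and>
   normLL (sumL 6) = normLL Al \<and>
   strip_while ((=) 0) Dl = strip_while ((=) 0) (mulL (om 1) Bl)"
  by code_simp

lemma B_eq: "(1 - qvar) * (1 - qvar ^ 2) ^ 2 * (1 - qvar ^ 3) ^ 2 * (1 - qvar ^ 4) = Poly Bl"
proof -
  have o1: "1 - qvar = Poly (om 1)" using one_minus[of 1] by (simp add: om_def)
  have o: "\<And>j. 1 - qvar ^ j = Poly (om j)" by (simp add: om_def one_minus)
  have "(1 - qvar) * (1 - qvar ^ 2) ^ 2 * (1 - qvar ^ 3) ^ 2 * (1 - qvar ^ 4) =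
        Poly (om 1) * Poly (om 2) ^ 2 * Poly (om 3) ^ 2 * (Poly (om 4) :: int poly)"
    by (simp only: o1 o)
  also have "\<dots> = Poly Bl" unfolding Bl_def Poly_mulL power2_eq_square by (simp only: mult.assoc)
  finally show ?thesis .
qed

lemma omY_eq: "1 - qvar ^ (m + j) = poly (pll (omY j)) (qvar ^ m)"
  unfolding omY_def by (rule one_minus_Y)

lemma omS: "poly (pll [shL 27 (om 1)]) Y = qvar ^ 27 * (1 - qvar)"
proof -
  have o1: "1 - qvar = Poly (om 1)" using one_minus[of 1] by (simp add: om_def)
  show ?thesis by (simp add: poly_pll_single Poly_shL o1)
qed

theorem theoremN33:
  fixes n :: nat
  assumes "n \<ge> 3"
  shows
   "(f_poly [n, 3, 3] 2 = qvar ^ 9 * qbinom (int n - 1) 2) \<and>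
   (f_poly [n, 3, 3] 3 = qvar ^ 11 * qbinom (int n - 1) 2 * qbinom (int n + 3) 1
                        + qvar ^ 12 * qbinom (int n) 3 * qbinom 4 1) \<and>
   (f_poly [n, 3, 3] 4 = qvar ^ 15 * qbinom (int n - 1) 2 * qbinom (int n + 2) 2
                        + qvar ^ 15 * qbinom (int n + 1) 4 * qbinom 5 2) \<and>
   (f_poly [n, 3, 3] 5 = qvar ^ 21 * qbinom (int n - 1) 2 * qbinom (int n + 1) 3
                        + qvar ^ 20 * qbinom (int n + 1) 4 * qbinom (int n + 3) 1) \<and>
   (f_poly [n, 3, 3] 6 = qvar ^ 27 *
       (((1 - qvar ^ (n - 2)) * (1 - qvar ^ (n - 1)) ^ 2 * (1 - qvar ^ n) ^ 2 * (1 - qvar ^ (n + 1)))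
        div ((1 - qvar) * (1 - qvar ^ 2) ^ 2 * (1 - qvar ^ 3) ^ 2 * (1 - qvar ^ 4)))) \<and>
   (f_poly [n, 3, 3] 6 = qvar ^ 27 * qbinom (int n) 3 ^ 2
                        - qvar ^ 28 * qbinom (int n) 4 * qbinom (int n) 2)"
proof -
  define m where "m = n - 3"
  have n: "n = m + 3" using assms by (simp add: m_def)
  have Df: "\<And>i. Dp * f_poly [n, 3, 3] i = poly (pll (sumL i)) (qvar ^ m)"
    using Dp_f[OF assms] by (simp add: m_def)
  have canc: "\<And>x y. Dp * x = Dp * y \<Longrightarrow> x = y" using Dp_nz by simp
  have dc: "dchk 2 0 E20" "dchk 2 1 E21" "dchk 3 1 E31" "dchk 2 2 E22" "dchk 4 2 E42"
      "dchk 2 3 E23" "dchk 4 1 E41" "dchk 3 3 E33" using dchks by auto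
  note dc' = dc[unfolded dchk_def]
  note fc = fchks
  have qa: "qbinom (int n - 1) 2 = qbinom (int (m + 2)) (int 2)" by (simp add: n algebra_simps)
  have qb: "qbinom (int n + 3) 1 = qbinom (int (m + 6)) (int 1)" by (simp add: n algebra_simps)
  have qc: "qbinom (int n) 3 = qbinom (int (m + 3)) (int 3)" by (simp add: n algebra_simps)
  have qd: "qbinom 4 1 = qbinom (int 4) (int 1)" by simp
  have qe: "qbinom (int n + 2) 2 = qbinom (int (m + 5)) (int 2)" by (simp add: n algebra_simps)
  have qf: "qbinom (int n + 1) 4 = qbinom (int (m + 4)) (int 4)" by (simp add: n algebra_simps)
  have qg: "qbinom 5 2 = qbinom (int 5) (int 2)" by simp
  have qh: "qbinom (int n + 1) 3 = qbinom (int (m + 4)) (int 3)" by (simp add: n algebra_simps)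
  have qi: "qbinom (int n) 4 = qbinom (int (m + 3)) (int 4)" by (simp add: n algebra_simps)
  have qj: "qbinom (int n) 2 = qbinom (int (m + 3)) (int 2)" by (simp add: n algebra_simps)

  have r2: "f_poly [n, 3, 3] 2 = qvar ^ 9 * qbinom (int n - 1) 2"
  proof (rule canc)
    have t: "Dp * (qvar ^ 9 * qbinom (int n - 1) 2) = poly (pll (tR1 9 E20 2 2)) (qvar ^ m)"
      unfolding qa tR1_def by (rule term1[OF dc'(1)]) simp
    have "pll (sumL 2) = pll (tR1 9 E20 2 2)" using fc by (intro normLL_eq) blast
    then show "Dp * f_poly [n, 3, 3] 2 = Dp * (qvar ^ 9 * qbinom (int n - 1) 2)"
      using Df t by simp
  qed

  have r3: "f_poly [n, 3, 3] 3 = qvar ^ 11 * qbinom (int n - 1) 2 * qbinom (int n + 3) 1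
                        + qvar ^ 12 * qbinom (int n) 3 * qbinom 4 1"
  proof (rule canc)
    have t1: "Dp * (qvar ^ 11 * qbinom (int n - 1) 2 * qbinom (int n + 3) 1) = poly (pll (tR2 11 E21 2 2 6 1)) (qvar ^ m)"
      unfolding qa qb tR2_def by (rule term2[OF dc'(2)]) simp_all
    have t2: "Dp * (qvar ^ 12 * qbinom (int n) 3 * qbinom 4 1) = poly (pll (tR2C 12 E31 3 3 4 1)) (qvar ^ m)"
      unfolding qc qd tR2C_def by (rule term2C[OF dc'(3)]) simp
    have "pll (sumL 3) = pll (addLL (tR2 11 E21 2 2 6 1) (tR2C 12 E31 3 3 4 1))" using fc by (intro normLL_eq) blast
    then show "Dp * f_poly [n, 3, 3] 3 = Dp * (qvar ^ 11 * qbinom (int n - 1) 2 * qbinom (int n + 3) 1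
                        + qvar ^ 12 * qbinom (int n) 3 * qbinom 4 1)"
      using Df t1 t2 by (simp add: distrib_left pll_addLL)
  qed

  have r4: "f_poly [n, 3, 3] 4 = qvar ^ 15 * qbinom (int n - 1) 2 * qbinom (int n + 2) 2
                        + qvar ^ 15 * qbinom (int n + 1) 4 * qbinom 5 2"
  proof (rule canc)
    have t1: "Dp * (qvar ^ 15 * qbinom (int n - 1) 2 * qbinom (int n + 2) 2) = poly (pll (tR2 15 E22 2 2 5 2)) (qvar ^ m)"
      unfolding qa qe tR2_def by (rule term2[OF dc'(4)]) simp_all
    have t2: "Dp * (qvar ^ 15 * qbinom (int n + 1) 4 * qbinom 5 2) = poly (pll (tR2C 15 E42 4 4 5 2)) (qvar ^ m)"
      unfolding qf qg tR2C_def by (rule term2C[OF dc'(5)]) simp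
    have "pll (sumL 4) = pll (addLL (tR2 15 E22 2 2 5 2) (tR2C 15 E42 4 4 5 2))" using fc by (intro normLL_eq) blast
    then show "Dp * f_poly [n, 3, 3] 4 = Dp * (qvar ^ 15 * qbinom (int n - 1) 2 * qbinom (int n + 2) 2
                        + qvar ^ 15 * qbinom (int n + 1) 4 * qbinom 5 2)"
      using Df t1 t2 by (simp add: distrib_left pll_addLL)
  qed

  have r5: "f_poly [n, 3, 3] 5 = qvar ^ 21 * qbinom (int n - 1) 2 * qbinom (int n + 1) 3
                        + qvar ^ 20 * qbinom (int n + 1) 4 * qbinom (int n + 3) 1"
  proof (rule canc)
    have t1: "Dp * (qvar ^ 21 * qbinom (int n - 1) 2 * qbinom (int n + 1) 3) = poly (pll (tR2 21 E23 2 2 4 3)) (qvar ^ m)"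
      unfolding qa qh tR2_def by (rule term2[OF dc'(6)]) simp_all
    have t2: "Dp * (qvar ^ 20 * qbinom (int n + 1) 4 * qbinom (int n + 3) 1) = poly (pll (tR2 20 E41 4 4 6 1)) (qvar ^ m)"
      unfolding qf qb tR2_def by (rule term2[OF dc'(7)]) simp_all
    have "pll (sumL 5) = pll (addLL (tR2 21 E23 2 2 4 3) (tR2 20 E41 4 4 6 1))" using fc by (intro normLL_eq) blast
    then show "Dp * f_poly [n, 3, 3] 5 = Dp * (qvar ^ 21 * qbinom (int n - 1) 2 * qbinom (int n + 1) 3
                        + qvar ^ 20 * qbinom (int n + 1) 4 * qbinom (int n + 3) 1)"
      using Df t1 t2 by (simp add: distrib_left pll_addLL)
  qed

  have r6: "f_poly [n, 3, 3] 6 = qvar ^ 27 * qbinom (int n) 3 ^ 2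
                        - qvar ^ 28 * qbinom (int n) 4 * qbinom (int n) 2"
  proof (rule canc)
    have t1: "Dp * (qvar ^ 27 * qbinom (int n) 3 * qbinom (int n) 3) = poly (pll (tR2 27 E33 3 3 3 3)) (qvar ^ m)"
      unfolding qc tR2_def by (rule term2[OF dc'(8)]) simp_all
    have t2: "Dp * (qvar ^ 28 * qbinom (int n) 4 * qbinom (int n) 2) = poly (pll (tR2 28 E42 3 4 3 2)) (qvar ^ m)"
      unfolding qi qj tR2_def by (rule term2[OF dc'(5)]) simp_all
    have "pll (addLL (sumL 6) (tR2 28 E42 3 4 3 2)) = pll (tR2 27 E33 3 3 3 3)" using fc by (intro normLL_eq) blast
    then have h: "pll (sumL 6) + pll (tR2 28 E42 3 4 3 2) = pll (tR2 27 E33 3 3 3 3)" by (simp only: pll_addLL)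
    have "poly (pll (sumL 6)) (qvar ^ m) + poly (pll (tR2 28 E42 3 4 3 2)) (qvar ^ m) = poly (pll (tR2 27 E33 3 3 3 3)) (qvar ^ m)"
      using arg_cong[OF h, of "\<lambda>p. poly p (qvar ^ m)"] by simp
    then have "Dp * f_poly [n, 3, 3] 6 + Dp * (qvar ^ 28 * qbinom (int n) 4 * qbinom (int n) 2)
        = Dp * (qvar ^ 27 * qbinom (int n) 3 * qbinom (int n) 3)"
      using Df t1 t2 by simp
    then show "Dp * f_poly [n, 3, 3] 6 = Dp * (qvar ^ 27 * qbinom (int n) 3 ^ 2
                        - qvar ^ 28 * qbinom (int n) 4 * qbinom (int n) 2)"
      by (simp add: right_diff_distrib power2_eq_square mult.assoc eq_diff_eq)
  qed

  define G where "G = qbinom (int n) 3 ^ 2 - qvar * qbinom (int n) 4 * qbinom (int n) 2"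
  define A where "A = (1 - qvar ^ (n - 2)) * (1 - qvar ^ (n - 1)) ^ 2 * (1 - qvar ^ n) ^ 2 * (1 - qvar ^ (n + 1))"
  define B where "B = (1 - qvar) * (1 - qvar ^ 2) ^ 2 * (1 - qvar ^ 3) ^ 2 * ((1 :: int poly) - qvar ^ 4)"
  have aux: "\<And>a b c :: int poly. qvar ^ 27 * (a ^ 2 - qvar * b * c) = qvar ^ 27 * a ^ 2 - qvar ^ 28 * b * c"
    by algebra
  have fG: "f_poly [n, 3, 3] 6 = qvar ^ 27 * G"
    using r6 unfolding G_def aux by simp
  have DB: "Dp = (1 - qvar) * B"
  proof -
    have "Dp = Poly (mulL (om 1) Bl)" using fc Poly_strip_eq unfolding Dp_def by blast
    also have "\<dots> = (1 - qvar) * B"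
      unfolding Poly_mulL B_def B_eq
      using one_minus[of 1] by (simp add: om_def)
    finally show ?thesis .
  qed
  have AY: "(1 - qvar) * qvar ^ 27 * A = poly (pll Al) (qvar ^ m)"
  proof -
    have a1: "1 - qvar ^ (n - 2) = poly (pll (omY 1)) (qvar ^ m)" using omY_eq[of m 1] n by simp
    have a2: "1 - qvar ^ (n - 1) = poly (pll (omY 2)) (qvar ^ m)" using omY_eq[of m 2] n by simp
    have a3: "1 - qvar ^ n = poly (pll (omY 3)) (qvar ^ m)" using omY_eq[of m 3] n by simp
    have a4: "1 - qvar ^ (n + 1) = poly (pll (omY 4)) (qvar ^ m)" using omY_eq[of m 4] n by (simp add: add.commute)
    show ?thesis
      unfolding A_def a1 a2 a3 a4 Al_def pll_mulLL poly_mult omS power2_eq_square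
      by (simp only: mult_ac)
  qed
  have "(1 - qvar) * qvar ^ 27 * (B * G) = (1 - qvar) * qvar ^ 27 * A"
  proof -
    have "(1 - qvar) * qvar ^ 27 * (B * G) = Dp * f_poly [n, 3, 3] 6"
      by (simp add: DB fG mult_ac)
    also have "\<dots> = poly (pll Al) (qvar ^ m)"
      using Df fc normLL_eq by metis
    finally show ?thesis using AY by simp
  qed
  moreover have nz: "(1 - qvar) * qvar ^ 27 \<noteq> (0 :: int poly)"
    using one_minus_qvar_nz[of 1] by (simp add: qvar_def)
  ultimately have BG: "B * G = A" by (simp only: mult_cancel_left mult.assoc[symmetric]) (use nz in auto)
  have Bnz: "B \<noteq> 0" using Dp_nz DB by auto
  have "A div B = G" using BG Bnz by (metis nonzero_mult_div_cancel_left)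
  then have r6a: "f_poly [n, 3, 3] 6 = qvar ^ 27 * (A div B)" using fG by simp
  show ?thesis using r2 r3 r4 r5 r6 r6a unfolding A_def B_def by blast
qed

end
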